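(* Let $\Lambda$ be a row-finite, source-free $k$-graph with no sinks, and let $\mu$ be a Radon measure on $\Lambda^\infty$ which gives rise to a $\Lambda$-projective system (with the standard prefixing and coding maps $\sigma_\lambda,\sigma^n$ and functions $f_\lambda$), with associated representation $\{T_\lambda:\lambda\in\Lambda\}$ on $L^2(\Lambda^\infty,\mu)$. Suppose $E\subseteq \Lambda^\infty$ is a minimal $\mu$-invariant subset. Then the restriction of $\{T_\lambda:\lambda\in\Lambda\}$ to $L^2(E,\mu)$ gives an irreducible representation of $C^*(\Lambda)$.
   Context: A $k$-graph is a countable small category $\Lambda$ with a functor $d:\Lambda\to\mathbb{N}^k$ with unique factorization; $\Lambda^0$ vertices, $r,s$ range/source, $v\Lambda^n$ (resp. $\Lambda^n v$) paths of degree $n$ with range (resp. source) $v$. Row-finite: $v\Lambda^n$ finite; source-free: $v\Lambda^n\ne\emptyset$; no sinks: $\Lambda^{e_i}v\ne\emptyset$ for every basis vector $e_i$ and every $v$. $C^*(\Lambda)$ is the universal $C^*$-algebra of a Cuntz–Krieger $\Lambda$-family $\{s_\lambda\}$. $\Lambda^\infty$: degree-preserving functors $\Omega_k\to\Lambda$ ($\Omega_k$ has morphisms $(m,n)$, $m\le n$ in $\mathbb{N}^k$); cylinder sets $Z(\lambda)$ (infinite paths beginning with $\lambda$) generate the topology and Borel structure; standard coding maps $\sigma^n(x)(p,q)=x(p+n,q+n)$, prefixing maps $\sigma_\lambda(x)=\lambda x$ on $Z(s(\lambda))$. A $\Lambda$-projective system on $(\Lambda^\infty,\mu)$ with these maps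 means: for each $n$, $\{\sigma_\lambda: d(\lambda)=n\}$ is a semibranching function system with coding map $\sigma^n$ (in particular $0<\mu(Z(s(\lambda)))<\infty$, $\mu(Z(\lambda))<\infty$, and $d(\mu\circ\sigma_\lambda)/d\mu>0$ a.e.), together with $f_\lambda\in L^2$ satisfying $0\ne d(\mu\circ\sigma_\lambda^{-1})/d\mu=|f_\lambda|^2$ and $f_\lambda(f_\nu\circ\sigma^{d(\lambda)})=f_{\lambda\nu}$; then $T_\lambda f=f_\lambda\cdot(f\circ\sigma^{d(\lambda)})$ is a Cuntz–Krieger family. A Borel set $A\subseteq\Lambda^\infty$ of nonzero measure is $\mu$-invariant if $\mu(A\,\Delta\,(\sigma^n)^{-1}(A))=0$ for all $n\in\mathbb{N}^k$. A $\mu$-invariant $E$ is minimal $\mu$-invariant if there is no $\mu$-invariant subset $A\subseteq E$ with $\mu(A\,\Delta\,E)\ne0$. *)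

theory Defs
  imports "HOL-Probability.Probability" "HOL-Library.Function_Algebras"
begin

text \<open>A k-graph is encoded by its set of morphisms
  (the type 'p), a degree map d, range and source maps r, s (vertices = morphisms of degree 0,
  i.e. the identity morphisms) and composition cmp (cmp l m defined when s l = r m).\<close>

definition kgraph ::
  "('p \<Rightarrow> ('k::finite \<Rightarrow> nat)) \<Rightarrow> ('p \<Rightarrow> 'p) \<Rightarrow> ('p \<Rightarrow> 'p) \<Rightarrow> ('p \<Rightarrow> 'p \<Rightarrow> 'p) \<Rightarrow> bool" where
  "kgraph d r s cmp \<longleftrightarrow>
     countable (UNIV :: 'p set) \<and>
     (\<forall>l. d (r l) = 0 \<and> d (s l) = 0) \<and>
     (\<forall>v. d v = 0 \<longrightarrow> r v = v \<and> s v = v) \<and>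
     (\<forall>l. cmp (r l) l = l \<and> cmp l (s l) = l) \<and>
     (\<forall>l m. s l = r m \<longrightarrow> r (cmp l m) = r l \<and> s (cmp l m) = s m \<and> d (cmp l m) = d l + d m) \<and>
     (\<forall>l m n. s l = r m \<and> s m = r n \<longrightarrow> cmp (cmp l m) n = cmp l (cmp m n)) \<and>
     (\<forall>l m n. d l = m + n \<longrightarrow>
        (\<exists>!p. d (fst p) = m \<and> d (snd p) = n \<and> s (fst p) = r (snd p) \<and> cmp (fst p) (snd p) = l))"

definition unit_deg :: "'k \<Rightarrow> ('k \<Rightarrow> nat)" where
  "unit_deg i = (\<lambda>j. if j = i then 1 else 0)"

definition row_finite :: "('p \<Rightarrow> ('k \<Rightarrow> nat)) \<Rightarrow> ('p \<Rightarrow> 'p) \<Rightarrow> bool" where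
  "row_finite d r \<longleftrightarrow> (\<forall>v n. d v = 0 \<longrightarrow> finite {l. r l = v \<and> d l = n})"

definition source_free :: "('p \<Rightarrow> ('k \<Rightarrow> nat)) \<Rightarrow> ('p \<Rightarrow> 'p) \<Rightarrow> bool" where
  "source_free d r \<longleftrightarrow> (\<forall>v n. d v = 0 \<longrightarrow> (\<exists>l. r l = v \<and> d l = n))"

definition no_sinks :: "('p \<Rightarrow> ('k \<Rightarrow> nat)) \<Rightarrow> ('p \<Rightarrow> 'p) \<Rightarrow> bool" where
  "no_sinks d s \<longleftrightarrow> (\<forall>v i. d v = 0 \<longrightarrow> (\<exists>l. s l = v \<and> d l = unit_deg i))"

text \<open>Infinite paths: degree-preserving functors from Omega_k. A path x is represented by
  x m n = image of the morphism (m,n) for m \<le> n (value undefined otherwise).\<close>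

definition infpaths ::
  "('p \<Rightarrow> ('k \<Rightarrow> nat)) \<Rightarrow> ('p \<Rightarrow> 'p) \<Rightarrow> ('p \<Rightarrow> 'p) \<Rightarrow> ('p \<Rightarrow> 'p \<Rightarrow> 'p)
     \<Rightarrow> (('k \<Rightarrow> nat) \<Rightarrow> ('k \<Rightarrow> nat) \<Rightarrow> 'p) set" where
  "infpaths d r s cmp =
     {x. (\<forall>m n. \<not> m \<le> n \<longrightarrow> x m n = undefined) \<and>
         (\<forall>m n. m \<le> n \<longrightarrow> d (x m n) + m = n) \<and>
         (\<forall>m n p. m \<le> n \<and> n \<le> p \<longrightarrow> s (x m n) = r (x n p) \<and> cmp (x m n) (x n p) = x m p)}"

definition cyl ::
  "('p \<Rightarrow> ('k \<Rightarrow> nat)) \<Rightarrow> ('p \<Rightarrow> 'p) \<Rightarrow> ('p \<Rightarrow> 'p) \<Rightarrow> ('p \<Rightarrow> 'p \<Rightarrow> 'p) \<Rightarrow> 'p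
     \<Rightarrow> (('k \<Rightarrow> nat) \<Rightarrow> ('k \<Rightarrow> nat) \<Rightarrow> 'p) set" where
  "cyl d r s cmp l = {x \<in> infpaths d r s cmp. x 0 (d l) = l}"

definition shift :: "('k \<Rightarrow> nat) \<Rightarrow> (('k \<Rightarrow> nat) \<Rightarrow> ('k \<Rightarrow> nat) \<Rightarrow> 'p) \<Rightarrow> (('k \<Rightarrow> nat) \<Rightarrow> ('k \<Rightarrow> nat) \<Rightarrow> 'p)" where
  "shift n x = (\<lambda>p q. x (p + n) (q + n))"

definition prefix ::
  "('p \<Rightarrow> ('k \<Rightarrow> nat)) \<Rightarrow> ('p \<Rightarrow> 'p) \<Rightarrow> ('p \<Rightarrow> 'p) \<Rightarrow> ('p \<Rightarrow> 'p \<Rightarrow> 'p) \<Rightarrow> 'p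
     \<Rightarrow> (('k \<Rightarrow> nat) \<Rightarrow> ('k \<Rightarrow> nat) \<Rightarrow> 'p) \<Rightarrow> (('k \<Rightarrow> nat) \<Rightarrow> ('k \<Rightarrow> nat) \<Rightarrow> 'p)" where
  "prefix d r s cmp l x =
     (THE y. y \<in> infpaths d r s cmp \<and> y 0 (d l) = l \<and> shift (d l) y = x)"

definition semibranching ::
  "'a measure \<Rightarrow> 'i set \<Rightarrow> ('i \<Rightarrow> 'a set) \<Rightarrow> ('i \<Rightarrow> 'a \<Rightarrow> 'a) \<Rightarrow> ('a \<Rightarrow> 'a) \<Rightarrow> bool" where
  "semibranching M I D tau cod \<longleftrightarrow>
     countable I \<and>
     cod \<in> measurable M M \<and>
     (\<forall>i\<in>I.
        D i \<in> sets M \<and> 0 < emeasure M (D i) \<and> emeasure M (D i) < \<infinity> \<and>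
        tau i \<in> measurable (restrict_space M (D i)) M \<and>
        (\<forall>A\<in>sets M. A \<subseteq> D i \<longrightarrow> tau i ` A \<in> sets M) \<and>
        emeasure M (tau i ` D i) < \<infinity> \<and>
        (\<forall>x\<in>D i. cod (tau i x) = x) \<and>
        (\<exists>h\<in>borel_measurable M. (\<forall>x. 0 \<le> h x) \<and> (AE x in M. x \<in> D i \<longrightarrow> 0 < h x) \<and>
           (\<forall>A\<in>sets M. A \<subseteq> D i \<longrightarrow>
               emeasure M (tau i ` A) = (\<integral>\<^sup>+x\<in>A. ennreal (h x) \<partial>M)))) \<and>
     emeasure M (space M - (\<Union>i\<in>I. tau i ` D i)) = 0 \<and>
     (\<forall>i\<in>I. \<forall>j\<in>I. i \<noteq> j \<longrightarrow> emeasure M (tau i ` D i \<inter> tau j ` D j) = 0)"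

definition projective_system ::
  "('p \<Rightarrow> ('k \<Rightarrow> nat)) \<Rightarrow> ('p \<Rightarrow> 'p) \<Rightarrow> ('p \<Rightarrow> 'p) \<Rightarrow> ('p \<Rightarrow> 'p \<Rightarrow> 'p)
     \<Rightarrow> (('k \<Rightarrow> nat) \<Rightarrow> ('k \<Rightarrow> nat) \<Rightarrow> 'p) measure
     \<Rightarrow> ('p \<Rightarrow> (('k \<Rightarrow> nat) \<Rightarrow> ('k \<Rightarrow> nat) \<Rightarrow> 'p) \<Rightarrow> complex) \<Rightarrow> bool" where
  "projective_system d r s cmp M f \<longleftrightarrow>
     (\<forall>n. semibranching M {l. d l = n} (\<lambda>l. cyl d r s cmp (s l)) (prefix d r s cmp) (shift n)) \<and>
     (\<forall>l. f l \<in> borel_measurable M \<and> integrable M (\<lambda>x. (cmod (f l x))\<^sup>2) \<and>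
          \<not> (AE x in M. f l x = 0) \<and>
          (\<forall>A\<in>sets M. emeasure M (prefix d r s cmp l -` A \<inter> cyl d r s cmp (s l))
                         = (\<integral>\<^sup>+x\<in>A. ennreal ((cmod (f l x))\<^sup>2) \<partial>M))) \<and>
     (\<forall>l m. s l = r m \<longrightarrow> (AE x in M. f (cmp l m) x = f l x * f m (shift (d l) x)))"

definition Top ::
  "('p \<Rightarrow> ('k \<Rightarrow> nat)) \<Rightarrow> ('p \<Rightarrow> (('k \<Rightarrow> nat) \<Rightarrow> ('k \<Rightarrow> nat) \<Rightarrow> 'p) \<Rightarrow> complex) \<Rightarrow> 'p
     \<Rightarrow> ((('k \<Rightarrow> nat) \<Rightarrow> ('k \<Rightarrow> nat) \<Rightarrow> 'p) \<Rightarrow> complex)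
     \<Rightarrow> ((('k \<Rightarrow> nat) \<Rightarrow> ('k \<Rightarrow> nat) \<Rightarrow> 'p) \<Rightarrow> complex)" where
  "Top d f l g = (\<lambda>x. f l x * g (shift (d l) x))"

text \<open>Square-integrable functions (elements of L^2 are represented by functions;
  a.e.-equal functions represent the same vector).\<close>
definition L2 :: "'a measure \<Rightarrow> ('a \<Rightarrow> complex) set" where
  "L2 M = {g \<in> borel_measurable M. integrable M (\<lambda>x. (cmod (g x))\<^sup>2)}"

definition L2_on :: "'a measure \<Rightarrow> 'a set \<Rightarrow> ('a \<Rightarrow> complex) set" where
  "L2_on M E = {g \<in> L2 M. AE x in M. x \<notin> E \<longrightarrow> g x = 0}"

definition l2inner :: "'a measure \<Rightarrow> ('a \<Rightarrow> complex) \<Rightarrow> ('a \<Rightarrow> complex) \<Rightarrow> complex" where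
  "l2inner M g h = (\<integral>x. g x * cnj (h x) \<partial>M)"

definition closed_subspace :: "'a measure \<Rightarrow> ('a \<Rightarrow> complex) set \<Rightarrow> bool" where
  "closed_subspace M V \<longleftrightarrow>
     V \<subseteq> L2 M \<and> (\<lambda>x. 0) \<in> V \<and>
     (\<forall>g\<in>V. \<forall>h\<in>V. (\<lambda>x. g x + h x) \<in> V) \<and>
     (\<forall>c. \<forall>g\<in>V. (\<lambda>x. c * g x) \<in> V) \<and>
     (\<forall>G g. (\<forall>n::nat. G n \<in> V) \<and> g \<in> L2 M \<and>
            (\<lambda>n. \<integral>x. (cmod (G n x - g x))\<^sup>2 \<partial>M) \<longlonglongrightarrow> 0 \<longrightarrow> g \<in> V)"

text \<open>V is invariant under the adjoint of the operator T acting on the Hilbert space H: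
  for every g in V, the vector T^* g (characterised by <T u, g> = <u, T^* g> for all u in H)
  lies in V.\<close>
definition adj_invariant ::
  "'a measure \<Rightarrow> ('a \<Rightarrow> complex) set \<Rightarrow> (('a \<Rightarrow> complex) \<Rightarrow> ('a \<Rightarrow> complex))
     \<Rightarrow> ('a \<Rightarrow> complex) set \<Rightarrow> bool" where
  "adj_invariant M H T V \<longleftrightarrow>
     (\<forall>g\<in>V. \<exists>h\<in>V. \<forall>u\<in>H. l2inner M (T u) g = l2inner M u h)"

definition mu_invariant :: "(('k \<Rightarrow> nat) \<Rightarrow> ('k \<Rightarrow> nat) \<Rightarrow> 'p) measure
     \<Rightarrow> (('k \<Rightarrow> nat) \<Rightarrow> ('k \<Rightarrow> nat) \<Rightarrow> 'p) set \<Rightarrow> bool" where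
  "mu_invariant M A \<longleftrightarrow>
     A \<in> sets M \<and> emeasure M A \<noteq> 0 \<and>
     (\<forall>n. emeasure M ((A - (shift n -` A \<inter> space M)) \<union> ((shift n -` A \<inter> space M) - A)) = 0)"

definition minimal_mu_invariant :: "(('k \<Rightarrow> nat) \<Rightarrow> ('k \<Rightarrow> nat) \<Rightarrow> 'p) measure
     \<Rightarrow> (('k \<Rightarrow> nat) \<Rightarrow> ('k \<Rightarrow> nat) \<Rightarrow> 'p) set \<Rightarrow> bool" where
  "minimal_mu_invariant M E \<longleftrightarrow>
     mu_invariant M E \<and>
     \<not> (\<exists>A. mu_invariant M A \<and> A \<subseteq> E \<and> emeasure M ((A - E) \<union> (E - A)) \<noteq> 0)"

end

theory Submission
  imports Defs
begin


lemma fun_nat_diff_add: "(m::'k \<Rightarrow> nat) \<le> n \<Longrightarrow> (n - m) + m = n"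
  by (simp add: fun_eq_iff le_fun_def)

lemma fa1: "(m::'k \<Rightarrow> nat) \<le> n \<Longrightarrow> m + (n - m) = n"
  by (simp add: fun_eq_iff le_fun_def)

lemma fa3: "(a::'k \<Rightarrow> nat) + m = n \<Longrightarrow> a = n - m"
proof (rule ext)
  fix i assume "a + m = n" then have "a i + m i = n i" by (metis plus_fun_apply)
  then show "a i = (n - m) i" by simp
qed

lemma fa4:
  assumes "(p::'k \<Rightarrow> nat) \<le> q" "q \<le> t" "t \<le> p + ((q - p) + e)" shows "t - q \<le> e"
proof (rule le_funI)
  fix i have "p i \<le> q i" "q i \<le> t i" "t i \<le> p i + ((q i - p i) + e i)" using assms by (auto simp: le_fun_def)
  then show "(t - q) i \<le> e i" by simp
qed

locale kgl =
  fixes d :: "'p \<Rightarrow> ('k::finite \<Rightarrow> nat)" and r s :: "'p \<Rightarrow> 'p" and cmp :: "'p \<Rightarrow> 'p \<Rightarrow> 'p"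
  assumes kg: "kgraph d r s cmp"
begin

lemma cnt: "countable (UNIV :: 'p set)" using kg by (simp add: kgraph_def)
lemma d_r[simp]: "d (r l) = 0" and d_s[simp]: "d (s l) = 0" using kg by (auto simp: kgraph_def)
lemma vert: "d v = 0 \<Longrightarrow> r v = v \<and> s v = v" using kg by (auto simp: kgraph_def)
lemma idl[simp]: "cmp (r l) l = l" and idr[simp]: "cmp l (s l) = l" using kg by (auto simp: kgraph_def)
lemma comp: "s l = r m \<Longrightarrow> r (cmp l m) = r l \<and> s (cmp l m) = s m \<and> d (cmp l m) = d l + d m"
  using kg by (auto simp: kgraph_def)
lemma assoc: "s l = r m \<Longrightarrow> s m = r n \<Longrightarrow> cmp (cmp l m) n = cmp l (cmp m n)"
  using kg unfolding kgraph_def by blast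
lemma fact: "d l = m + n \<Longrightarrow> \<exists>!p. d (fst p) = m \<and> d (snd p) = n \<and> s (fst p) = r (snd p) \<and> cmp (fst p) (snd p) = l"
  using kg unfolding kgraph_def by blast

lemma FU:
  assumes "s a = r b" "s a' = r b'" "cmp a b = cmp a' b'" "d a = d a'" "d b = d b'"
  shows "a = a' \<and> b = b'"
proof -
  have "d (cmp a b) = d a + d b" using comp assms(1) by blast
  from fact[OF this] obtain p where
    "\<forall>q. (d (fst q) = d a \<and> d (snd q) = d b \<and> s (fst q) = r (snd q) \<and> cmp (fst q) (snd q) = cmp a b) \<longrightarrow> q = p"
    by metis
  then have "(a,b) = p" "(a',b') = p" using assms by auto
  then show ?thesis by auto
qed

lemma FE:
  assumes "m \<le> d c"
  shows "\<exists>a b. d a = m \<and> d b = d c - m \<and> s a = r b \<and> cmp a b = c"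
proof -
  have "d c = m + (d c - m)" using fun_nat_diff_add[OF assms] by (simp add: add.commute)
  from fact[OF this] show ?thesis by (metis (no_types))
qed

definition seg :: "'p \<Rightarrow> ('k \<Rightarrow> nat) \<Rightarrow> ('k \<Rightarrow> nat) \<Rightarrow> 'p" where
  "seg c p q = (THE b. \<exists>a e. d a = p \<and> d b = q - p \<and> d e = d c - q \<and> s a = r b \<and> s b = r e \<and> cmp a (cmp b e) = c)"

lemma seg_eq:
  assumes "s a = r b" "s b = r e" "p = d a" "q = d a + d b" "c = cmp a (cmp b e)"
  shows "seg c p q = b"
  unfolding seg_def
proof (rule the_equality)
  have dbe: "d (cmp b e) = d b + d e" "r (cmp b e) = r b" using comp assms(2) by auto
  have dc: "d c = d a + (d b + d e)" using comp[of a "cmp b e"] assms dbe by auto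
  show "\<exists>a' e'. d a' = p \<and> d b = q - p \<and> d e' = d c - q \<and> s a' = r b \<and> s b = r e' \<and> cmp a' (cmp b e') = c"
    using assms dc by (intro exI[of _ a] exI[of _ e]) (auto simp: fun_eq_iff)
  fix b' assume "\<exists>a' e'. d a' = p \<and> d b' = q - p \<and> d e' = d c - q \<and> s a' = r b' \<and> s b' = r e' \<and> cmp a' (cmp b' e') = c"
  then obtain a' e' where h: "d a' = p" "d b' = q - p" "d e' = d c - q" "s a' = r b'" "s b' = r e'" "cmp a' (cmp b' e') = c"
    by blast
  have dbe': "d (cmp b' e') = d b' + d e'" "r (cmp b' e') = r b'" using comp h(5) by auto
  have db: "d b' = d b" using h(2) assms(3,4) by (auto simp: fun_eq_iff)
  have de: "d e' = d e" using h(3) assms(3,4) dc by (auto simp: fun_eq_iff)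
  have "a = a' \<and> cmp b e = cmp b' e'"
    by (rule FU) (use assms h dbe dbe' db de in auto)
  then have "b = b' \<and> e = e'"
    by (intro FU) (use assms h db de in auto)
  then show "b' = b" by simp
qed

lemma seg_ex:
  assumes "p \<le> q" "q \<le> d c"
  shows "\<exists>a b e. s a = r b \<and> s b = r e \<and> d a = p \<and> d b = q - p \<and> cmp a (cmp b e) = c"
proof -
  have "p \<le> d c" using assms by (rule order_trans)
  from FE[OF this] obtain a c' where h1: "d a = p" "d c' = d c - p" "s a = r c'" "cmp a c' = c" by blast
  have "q - p \<le> d c'" using assms(2) unfolding h1(2) by (simp add: le_fun_def diff_le_mono)
  from FE[OF this] obtain b e where h2: "d b = q - p" "s b = r e" "cmp b e = c'" by blast
  show ?thesis using h1 h2 by (intro exI[of _ a] exI[of _ b] exI[of _ e]) (auto dest: comp)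
qed

lemma seg_deg:
  assumes "p \<le> q" "q \<le> d c"
  shows "d (seg c p q) = q - p"
proof -
  obtain a b e where h: "s a = r b" "s b = r e" "d a = p" "d b = q - p" "cmp a (cmp b e) = c"
    using seg_ex[OF assms] by blast
  have "seg c p q = b" by (rule seg_eq[OF h(1,2)]) (use h assms fun_nat_diff_add[OF assms(1)] in \<open>auto simp: add.commute\<close>)
  then show ?thesis using h by simp
qed

lemma seg_char:
  assumes "p \<le> q" "q \<le> d c"
  shows "\<exists>a e. s a = r (seg c p q) \<and> s (seg c p q) = r e \<and> d a = p \<and> d (seg c p q) = q - p \<and> cmp a (cmp (seg c p q) e) = c"
proof -
  obtain a b e where h: "s a = r b" "s b = r e" "d a = p" "d b = q - p" "cmp a (cmp b e) = c"
    using seg_ex[OF assms] by blast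
  have "seg c p q = b" by (rule seg_eq[OF h(1,2)]) (use h assms fun_nat_diff_add[OF assms(1)] in \<open>auto simp: add.commute\<close>)
  then show ?thesis using h by blast
qed

lemma ip_deg: "x \<in> infpaths d r s cmp \<Longrightarrow> m \<le> n \<Longrightarrow> d (x m n) + m = n"
  unfolding infpaths_def by blast
lemma ip_comp: "x \<in> infpaths d r s cmp \<Longrightarrow> m \<le> n \<Longrightarrow> n \<le> p \<Longrightarrow> s (x m n) = r (x n p) \<and> cmp (x m n) (x n p) = x m p"
  unfolding infpaths_def by blast
lemma ip_undef: "x \<in> infpaths d r s cmp \<Longrightarrow> \<not> m \<le> n \<Longrightarrow> x m n = undefined"
  unfolding infpaths_def by blast

lemma ip_deg': "x \<in> infpaths d r s cmp \<Longrightarrow> m \<le> n \<Longrightarrow> d (x m n) = n - m"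
  using ip_deg[of x m n] by (intro fa3)

lemma KL:
  assumes x: "x \<in> infpaths d r s cmp" and "p \<le> q" "q \<le> t"
  shows "seg (x 0 t) p q = x p q"
proof -
  have pt: "p \<le> t" using assms(2,3) by (rule order_trans)
  have "x 0 t = cmp (x 0 p) (x p t)" using ip_comp[OF x, of 0 p t] pt by (auto simp: le_fun_def)
  also have "x p t = cmp (x p q) (x q t)" using ip_comp[OF x, of p q t] assms by auto
  finally have e: "x 0 t = cmp (x 0 p) (cmp (x p q) (x q t))" .
  show ?thesis
  proof (rule seg_eq[OF _ _ _ _ e])
    show "s (x 0 p) = r (x p q)" using ip_comp[OF x, of 0 p q] assms by (auto simp: le_fun_def)
    show "s (x p q) = r (x q t)" using ip_comp[OF x, of p q t] assms by auto
    have d0: "d (x 0 p) = p" using ip_deg[OF x, of 0 p] by (auto simp: le_fun_def)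
    then show "p = d (x 0 p)" by simp
    show "q = d (x 0 p) + d (x p q)" using d0 ip_deg[OF x, of p q] assms by (simp add: add.commute)
  qed
qed

lemma seg_prefix:
  assumes "s c = r e" "p \<le> q" "q \<le> d c"
  shows "seg (cmp c e) p q = seg c p q"
proof -
  obtain a e' where h: "s a = r (seg c p q)" "s (seg c p q) = r e'" "d a = p" "d (seg c p q) = q - p"
     "cmp a (cmp (seg c p q) e') = c" using seg_char[OF assms(2,3)] by blast
  have se': "s e' = r e" using comp[OF h(2)] comp[of a "cmp (seg c p q) e'"] h assms(1) by auto
  have "cmp c e = cmp a (cmp (cmp (seg c p q) e') e)"
    using h(5)[symmetric] assoc[of a "cmp (seg c p q) e'" e] comp[OF h(2)] h(1) se' by auto
  also have "\<dots> = cmp a (cmp (seg c p q) (cmp e' e))" using assoc[OF h(2) se'] by simp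
  finally have e: "cmp c e = cmp a (cmp (seg c p q) (cmp e' e))" .
  show ?thesis
    by (rule seg_eq[OF h(1) _ _ _ e]) (use h se' comp[OF se'] fun_nat_diff_add[OF assms(2)] in \<open>auto simp: add.commute\<close>)
qed

lemma seg_comp:
  assumes "p \<le> q" "q \<le> t" "t \<le> d c"
  shows "s (seg c p q) = r (seg c q t) \<and> cmp (seg c p q) (seg c q t) = seg c p t"
proof -
  have qc: "q \<le> d c" using assms order_trans by blast
  obtain a e where h: "s a = r (seg c p q)" "s (seg c p q) = r e" "d a = p" "d (seg c p q) = q - p"
     "cmp a (cmp (seg c p q) e) = c" using seg_char[OF assms(1) qc] by blast
  define b where "b = seg c p q"
  have hb: "s a = r b" "s b = r e" "d b = q - p" "cmp a (cmp b e) = c" using h b_def by auto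
  have dc: "d c = p + ((q - p) + d e)" using hb comp[OF hb(2)] comp[of a "cmp b e"] h(3) by auto
  have "t - q \<le> d e" using fa4[OF assms(1,2)] assms(3) dc by simp
  from FE[OF this] obtain b2 e2 where h2: "d b2 = t - q" "d e2 = d e - (t - q)" "s b2 = r e2" "cmp b2 e2 = e" by blast
  have sb: "s b = r b2" using hb(2) h2(4) comp[OF h2(3)] by auto
  have c1: "c = cmp (cmp a b) (cmp b2 e2)"
    using hb(4) assoc[OF hb(1), of "cmp b2 e2"] h2(4) hb(2) by auto
  have s1: "seg c q t = b2"
    by (rule seg_eq[OF _ h2(3) _ _ c1]) (use hb h(3) h2(1) sb comp[OF hb(1)] assms fa1[OF assms(1)] fun_nat_diff_add[OF assms(2)] in \<open>auto simp: add.commute\<close>)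
  have c2: "c = cmp a (cmp (cmp b b2) e2)"
    using hb(4) h2(4) assoc[OF sb h2(3)] by auto
  have "p \<le> t" using assms order_trans by blast
  have s2: "seg c p t = cmp b b2"
  proof (rule seg_eq[OF _ _ _ _ c2])
    show "s a = r (cmp b b2)" using hb(1) comp[OF sb] by simp
    show "s (cmp b b2) = r e2" using comp[OF sb] h2(3) by simp
    show "p = d a" using h(3) by simp
    have "d a + d (cmp b b2) = (p + (q - p)) + (t - q)" using comp[OF sb] h(3) hb(3) h2(1) by (simp add: add.assoc)
    also have "\<dots> = t" using fa1[OF assms(1)] fa1[OF assms(2)] by simp
    finally show "t = d a + d (cmp b b2)" by simp
  qed
  show ?thesis using s1 s2 sb b_def by simp
qed

lemma seg_shift:
  assumes "s a = r c" "p \<le> q" "q \<le> d c"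
  shows "seg (cmp a c) (d a + p) (d a + q) = seg c p q"
proof -
  obtain a' e where h: "s a' = r (seg c p q)" "s (seg c p q) = r e" "d a' = p" "d (seg c p q) = q - p"
     "cmp a' (cmp (seg c p q) e) = c" using seg_char[OF assms(2,3)] by blast
  have sa: "s a = r a'" using assms(1) h(5) comp[OF h(2)] comp[of a' "cmp (seg c p q) e"] h(1) by auto
  have e: "cmp a c = cmp (cmp a a') (cmp (seg c p q) e)"
    using assoc[OF sa, of "cmp (seg c p q) e"] h(5) h(1) comp[OF h(2)] by auto
  have q: "d a' + d (seg c p q) = q" using h(3,4) fa1[OF assms(2)] by simp
  show ?thesis
  proof (rule seg_eq[OF _ h(2) _ _ e])
    show "s (cmp a a') = r (seg c p q)" using h(1) comp[OF sa] by simp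
    show "d a + p = d (cmp a a')" using h(3) comp[OF sa] by simp
    show "d a + q = d (cmp a a') + d (seg c p q)" using q comp[OF sa] by (simp add: add.assoc)
  qed
qed

lemma seg_first:
  assumes "s a = r c"
  shows "seg (cmp a c) 0 (d a) = a"
proof -
  have "r (cmp a c) = r a" using comp[OF assms] by simp
  then have e: "cmp a c = cmp (r a) (cmp a c)" using idl[of "cmp a c"] by simp
  show ?thesis by (rule seg_eq[OF _ assms _ _ e]) (use vert[of "r a"] in auto)
qed

lemma zero_le_fun[simp]: "(0::'k \<Rightarrow> nat) \<le> p" by (simp add: le_fun_def)
lemma le_add_fun[simp]: "(q::'k \<Rightarrow> nat) \<le> n + q" "(q::'k \<Rightarrow> nat) \<le> q + n" by (auto simp: le_fun_def)

lemma prefix_exists: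
  assumes y: "y \<in> infpaths d r s cmp" and y0: "y 0 0 = s l"
  shows "\<exists>!z. z \<in> infpaths d r s cmp \<and> z 0 (d l) = l \<and> shift (d l) z = y"
proof -
  define n where "n = d l"
  define C where "C = (\<lambda>q. cmp l (y 0 q))"
  define z where "z = (\<lambda>p q. if p \<le> q then seg (C q) p q else undefined)"
  have sl: "s l = r (y 0 q)" for q
    using ip_comp[OF y, of 0 0 q] y0 vert[of "s l"] by simp
  have dC: "d (C q) = n + q" for q
    using comp[OF sl[of q]] ip_deg'[OF y, of 0 q] unfolding C_def n_def by simp
  have Cq: "q \<le> d (C q)" for q using dC by simp
  have Ct: "C t = cmp (C q) (y q t)" and sCq: "s (C q) = r (y q t)" if "q \<le> t" for q t
  proof -
    have "y 0 t = cmp (y 0 q) (y q t)" "s (y 0 q) = r (y q t)" using ip_comp[OF y, of 0 q t] that by auto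
    then show "C t = cmp (C q) (y q t)" unfolding C_def using assoc[OF sl[of q]] by simp
    show "s (C q) = r (y q t)" unfolding C_def using comp[OF sl[of q]] \<open>s (y 0 q) = r (y q t)\<close> by simp
  qed
  have zin: "z \<in> infpaths d r s cmp"
    unfolding infpaths_def
  proof (intro CollectI conjI allI impI)
    fix p q :: "'k \<Rightarrow> nat" assume "\<not> p \<le> q" then show "z p q = undefined" unfolding z_def by simp
  next
    fix p q :: "'k \<Rightarrow> nat" assume pq: "p \<le> q"
    then show "d (z p q) + p = q" unfolding z_def using seg_deg[OF pq Cq] fun_nat_diff_add[OF pq] by simp
  next
    fix p q t :: "'k \<Rightarrow> nat" assume h: "p \<le> q \<and> q \<le> t"
    then have pt: "p \<le> t" using order_trans by blast
    have qt: "q \<le> d (C t)" using h Cq[of t] order_trans by blast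
    have e1: "seg (C t) p q = seg (C q) p q" using Ct[of q t] sCq[of q t] seg_prefix[of "C q" "y q t" p q] h Cq by auto
    have "s (seg (C t) p q) = r (seg (C t) q t) \<and> cmp (seg (C t) p q) (seg (C t) q t) = seg (C t) p t"
      using seg_comp[of p q t "C t"] h Cq by auto
    then show "s (z p q) = r (z q t)"
      unfolding z_def using h pt e1 by simp
  next
    fix p q t :: "'k \<Rightarrow> nat" assume h: "p \<le> q \<and> q \<le> t"
    then have pt: "p \<le> t" using order_trans by blast
    have e1: "seg (C t) p q = seg (C q) p q" using Ct[of q t] sCq[of q t] seg_prefix[of "C q" "y q t" p q] h Cq by auto
    have "s (seg (C t) p q) = r (seg (C t) q t) \<and> cmp (seg (C t) p q) (seg (C t) q t) = seg (C t) p t"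
      using seg_comp[of p q t "C t"] h Cq by auto
    then show "cmp (z p q) (z q t) = z p t"
      unfolding z_def using h pt e1 by simp
  qed
  have z0: "z 0 n = l"
    unfolding z_def C_def n_def using seg_first[OF sl[of "d l"]] by simp
  have zs: "shift n z = y"
  proof (intro ext)
    fix p q :: "'k \<Rightarrow> nat"
    show "shift n z p q = y p q"
    proof (cases "p \<le> q")
      case True
      then have "p + n \<le> q + n" by (simp add: le_fun_def)
      then have "shift n z p q = seg (cmp l (y 0 (q + n))) (n + p) (n + q)"
        unfolding shift_def z_def C_def by (simp add: add.commute)
      also have "\<dots> = seg (y 0 (q + n)) p q"
        unfolding n_def by (rule seg_shift[OF sl]) (use True ip_deg'[OF y, of 0 "q + d l"] in auto)
      also have "\<dots> = y p q" by (rule KL[OF y True]) simp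
      finally show ?thesis .
    next
      case False
      then have "\<not> p + n \<le> q + n" by (auto simp: le_fun_def)
      then show ?thesis unfolding shift_def z_def using ip_undef[OF y False] by simp
    qed
  qed
  have uniq: "z' = z" if h: "z' \<in> infpaths d r s cmp" "z' 0 n = l" "shift n z' = y" for z'
  proof (intro ext)
    fix p q :: "'k \<Rightarrow> nat"
    show "z' p q = z p q"
    proof (cases "p \<le> q")
      case True
      have "z' p q = seg (z' 0 (q + n)) p q" using KL[OF h(1) True, of "q + n"] by simp
      have c: "cmp (z' 0 n) (z' n (q + n)) = z' 0 (q + n)"
        by (rule conjunct2[OF ip_comp[OF h(1)]]) simp_all
      have yy: "z' n (q + n) = y 0 q" using fun_cong[OF fun_cong[OF h(3), of 0], of q] unfolding shift_def by simp
      have "z' 0 (q + n) = cmp l (y 0 q)" using c yy h(2) by simp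
      then show ?thesis using \<open>z' p q = seg (z' 0 (q + n)) p q\<close> True unfolding z_def C_def by simp
    next
      case False
      then show ?thesis using ip_undef[OF h(1) False] unfolding z_def by simp
    qed
  qed
  show ?thesis using zin z0 zs uniq unfolding n_def by blast
qed

lemma cyl_s: "y \<in> cyl d r s cmp (s l) \<longleftrightarrow> y \<in> infpaths d r s cmp \<and> y 0 0 = s l"
  unfolding cyl_def by simp

lemma prefix_props:
  assumes "y \<in> cyl d r s cmp (s l)"
  shows "prefix d r s cmp l y \<in> cyl d r s cmp l \<and> shift (d l) (prefix d r s cmp l y) = y"
proof -
  have "\<exists>!z. z \<in> infpaths d r s cmp \<and> z 0 (d l) = l \<and> shift (d l) z = y"
    using prefix_exists assms cyl_s by blast
  from theI'[OF this] show ?thesis unfolding prefix_def cyl_def by blast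
qed

lemma in_cyl_vertex: "x \<in> infpaths d r s cmp \<Longrightarrow> x \<in> cyl d r s cmp (x 0 0)"
proof -
  assume x: "x \<in> infpaths d r s cmp"
  have "d (x 0 0) = 0" using ip_deg[OF x, of 0 0] by simp
  then show ?thesis unfolding cyl_def using x by simp
qed

lemma cyl_disj: "x \<in> cyl d r s cmp l \<Longrightarrow> x \<in> cyl d r s cmp l' \<Longrightarrow> d l = d l' \<Longrightarrow> l = l'"
  unfolding cyl_def by auto

end


lemma sq_sum_le: "((a::real) + b)\<^sup>2 \<le> 2 * a\<^sup>2 + 2 * b\<^sup>2"
proof -
  have "0 \<le> (a - b)\<^sup>2" by simp
  then show ?thesis by (simp add: power2_eq_square algebra_simps)
qed

lemma prod_le_sq: "0 \<le> (a::real) \<Longrightarrow> 0 \<le> b \<Longrightarrow> a * b \<le> a\<^sup>2 + b\<^sup>2"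
proof -
  assume "0 \<le> a" "0 \<le> b"
  then have "0 \<le> a * b" by simp
  moreover have "0 \<le> (a - b)\<^sup>2" by simp
  ultimately show ?thesis by (simp add: power2_eq_square algebra_simps)
qed

lemma borel_measurable_cnj'[measurable]:
  "f \<in> borel_measurable M \<Longrightarrow> (\<lambda>x. cnj (f x)) \<in> borel_measurable M"
  by (rule borel_measurable_continuous_on[OF continuous_on_cnj[OF continuous_on_id]])

lemma L2_iff: "g \<in> L2 M \<longleftrightarrow> g \<in> borel_measurable M \<and> (\<integral>\<^sup>+x. ennreal ((cmod (g x))\<^sup>2) \<partial>M) < \<infinity>"
  unfolding L2_def by (auto simp: integrable_iff_bounded)

lemma L2_meas[measurable_dest]: "g \<in> L2 M \<Longrightarrow> g \<in> borel_measurable M"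
  unfolding L2_def by auto

lemma L2_int: "g \<in> L2 M \<Longrightarrow> integrable M (\<lambda>x. (cmod (g x))\<^sup>2)"
  unfolding L2_def by auto

lemma L2_bound:
  assumes g: "g \<in> L2 M" and h: "h \<in> borel_measurable M" and K: "AE x in M. cmod (h x) \<le> K * cmod (g x)"
  shows "h \<in> L2 M"
proof -
  have i: "integrable M (\<lambda>x. K\<^sup>2 * (cmod (g x))\<^sup>2)" using L2_int[OF g] by simp
  have a:  "AE x in M. norm ((cmod (h x))\<^sup>2) \<le> norm (K\<^sup>2 * (cmod (g x))\<^sup>2)"
    using K
  proof eventually_elim
    case (elim x)
    have "(cmod (h x))\<^sup>2 \<le> (K * cmod (g x))\<^sup>2" using elim by (intro power_mono) auto
    then show ?case by (simp add: power_mult_distrib)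
  qed
  note [measurable] = h
  have "integrable M (\<lambda>x. (cmod (h x))\<^sup>2)"
    by (rule Bochner_Integration.integrable_bound[OF i _ a]) measurable
  then show ?thesis using h unfolding L2_def by auto
qed

lemma L2_add:
  assumes g: "g \<in> L2 M" and h: "h \<in> L2 M"
  shows "(\<lambda>x. g x + h x) \<in> L2 M"
proof -
  have i: "integrable M (\<lambda>x. 2 * (cmod (g x))\<^sup>2 + 2 * (cmod (h x))\<^sup>2)" using L2_int[OF g] L2_int[OF h] by simp
  have a:  "AE x in M. norm ((cmod (g x + h x))\<^sup>2) \<le> norm (2 * (cmod (g x))\<^sup>2 + 2 * (cmod (h x))\<^sup>2)"
  proof (intro AE_I2)
    fix x
    have "cmod (g x + h x) \<le> cmod (g x) + cmod (h x)" by (rule norm_triangle_ineq)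
    then have "(cmod (g x + h x))\<^sup>2 \<le> (cmod (g x) + cmod (h x))\<^sup>2" by (intro power_mono) auto
    also have "\<dots> \<le> 2 * (cmod (g x))\<^sup>2 + 2 * (cmod (h x))\<^sup>2"
      by (rule sq_sum_le)
    finally show "norm ((cmod (g x + h x))\<^sup>2) \<le> norm (2 * (cmod (g x))\<^sup>2 + 2 * (cmod (h x))\<^sup>2)" by simp
  qed
  note [measurable] = L2_meas[OF g] L2_meas[OF h]
  have "integrable M (\<lambda>x. (cmod (g x + h x))\<^sup>2)"
    by (rule Bochner_Integration.integrable_bound[OF i _ a]) measurable
  moreover have "(\<lambda>x. g x + h x) \<in> borel_measurable M" by measurable
  ultimately show ?thesis unfolding L2_def by blast
qed

lemma L2_cmult: "g \<in> L2 M \<Longrightarrow> (\<lambda>x. c * g x) \<in> L2 M"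
  by (rule L2_bound[where K="cmod c"]) (auto simp: norm_mult)

lemma L2_zero: "(\<lambda>x. 0) \<in> L2 M"
  unfolding L2_def by simp

lemma L2_diff: "g \<in> L2 M \<Longrightarrow> h \<in> L2 M \<Longrightarrow> (\<lambda>x. g x - h x) \<in> L2 M"
  using L2_add[of g M "\<lambda>x. (-1) * h x"] L2_cmult[of h M "-1"] by simp

lemma L2_mult_bounded:
  assumes g: "g \<in> L2 M" and phi: "phi \<in> borel_measurable M" and K: "\<And>x. x \<in> space M \<Longrightarrow> cmod (phi x) \<le> K"
  shows "(\<lambda>x. phi x * g x) \<in> L2 M"
proof (rule L2_bound[OF g, where K=K])
  show "(\<lambda>x. phi x * g x) \<in> borel_measurable M" using g phi by measurable
  show "AE x in M. cmod (phi x * g x) \<le> K * cmod (g x)"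
    using K by (intro AE_I2) (auto simp: norm_mult intro: mult_right_mono)
qed

lemma L2_indicator_mult:
  assumes g: "g \<in> L2 M" and A: "A \<in> sets M"
  shows "(\<lambda>x. indicator A x * g x) \<in> L2 M"
  by (rule L2_mult_bounded[OF g, where K=1]) (use A in \<open>auto simp: indicator_def\<close>)

lemma L2_ae:
  assumes g: "g \<in> L2 M" and h: "h \<in> borel_measurable M" and ae: "AE x in M. g x = h x"
  shows "h \<in> L2 M"
  by (rule L2_bound[OF g h, where K=1]) (use ae in \<open>eventually_elim, simp\<close>)

lemma L2_indicator:
  assumes A: "A \<in> sets M" "emeasure M A < \<infinity>"
  shows "(indicator A :: _ \<Rightarrow> complex) \<in> L2 M"
proof -
  have "(\<integral>\<^sup>+x. ennreal ((cmod (indicator A x :: complex))\<^sup>2) \<partial>M) = (\<integral>\<^sup>+x. indicator A x \<partial>M)"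
    by (intro nn_integral_cong) (auto simp: indicator_def)
  also have "\<dots> = emeasure M A" using A by simp
  finally show ?thesis unfolding L2_iff using A by simp
qed

lemma inner_integrable:
  assumes g: "g \<in> L2 M" and h: "h \<in> L2 M"
  shows "integrable M (\<lambda>x. g x * cnj (h x))"
proof -
  have i: "integrable M (\<lambda>x. (cmod (g x))\<^sup>2 + (cmod (h x))\<^sup>2)" using L2_int[OF g] L2_int[OF h] by simp
  have a:  "AE x in M. norm (g x * cnj (h x)) \<le> norm ((cmod (g x))\<^sup>2 + (cmod (h x))\<^sup>2)"
  proof (intro AE_I2)
    fix x
    have "norm (g x * cnj (h x)) = cmod (g x) * cmod (h x)" by (simp add: norm_mult)
    also have "\<dots> \<le> (cmod (g x))\<^sup>2 + (cmod (h x))\<^sup>2" by (rule prod_le_sq) auto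
    finally show "norm (g x * cnj (h x)) \<le> norm ((cmod (g x))\<^sup>2 + (cmod (h x))\<^sup>2)" by simp
  qed
  note [measurable] = L2_meas[OF g] L2_meas[OF h]
  show ?thesis
    by (rule Bochner_Integration.integrable_bound[OF i _ a]) measurable
qed

lemma l2inner_self_zero:
  assumes g: "g \<in> L2 M" and z: "l2inner M g g = 0"
  shows "AE x in M. g x = 0"
proof -
  have "l2inner M g g = (\<integral>x. complex_of_real ((cmod (g x))\<^sup>2) \<partial>M)"
    unfolding l2inner_def by (intro Bochner_Integration.integral_cong refl) (rule complex_norm_square[symmetric])
  also have "\<dots> = complex_of_real (\<integral>x. (cmod (g x))\<^sup>2 \<partial>M)" by (rule integral_complex_of_real)
  finally have "(\<integral>x. (cmod (g x))\<^sup>2 \<partial>M) = 0" using z by simp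
  then have "AE x in M. (cmod (g x))\<^sup>2 = 0"
    using integral_nonneg_eq_0_iff_AE[OF L2_int[OF g]] by simp
  then show ?thesis by simp
qed

lemma l2inner_diff_right:
  assumes "u \<in> L2 M" "g \<in> L2 M" "h \<in> L2 M"
  shows "l2inner M u (\<lambda>x. g x - h x) = l2inner M u g - l2inner M u h"
proof -
  have "l2inner M u (\<lambda>x. g x - h x) = (\<integral>x. u x * cnj (g x) - u x * cnj (h x) \<partial>M)"
    unfolding l2inner_def by (simp add: algebra_simps)
  also have "\<dots> = l2inner M u g - l2inner M u h"
    unfolding l2inner_def using inner_integrable assms by (intro Bochner_Integration.integral_diff) auto
  finally show ?thesis .
qed

context
  fixes M :: "'a measure" and V
  assumes V: "closed_subspace M V"
begin

lemma CS_L2: "g \<in> V \<Longrightarrow> g \<in> L2 M" using V unfolding closed_subspace_def by blast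
lemma CS_zero: "(\<lambda>x. 0) \<in> V" using V unfolding closed_subspace_def by blast
lemma CS_add: "g \<in> V \<Longrightarrow> h \<in> V \<Longrightarrow> (\<lambda>x. g x + h x) \<in> V" using V unfolding closed_subspace_def by blast
lemma CS_cmult: "g \<in> V \<Longrightarrow> (\<lambda>x. c * g x) \<in> V" using V unfolding closed_subspace_def by blast
lemma CS_diff: "g \<in> V \<Longrightarrow> h \<in> V \<Longrightarrow> (\<lambda>x. g x - h x) \<in> V"
  using CS_add[of g "\<lambda>x. (-1) * h x"] CS_cmult[of h "-1"] by simp

lemma CS_lim:
  assumes G: "\<And>n. G n \<in> V" and g: "g \<in> L2 M" and b: "b \<in> L2 M"
    and lim: "AE x in M. (\<lambda>n. G n x) \<longlonglongrightarrow> g x"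
    and bound: "\<And>n. AE x in M. cmod (G n x) \<le> cmod (b x)"
  shows "g \<in> V"
proof -
  have GL: "G n \<in> L2 M" for n using CS_L2[OF G] .
  have "(\<lambda>n. \<integral>x. (cmod (G n x - g x))\<^sup>2 \<partial>M) \<longlonglongrightarrow> (\<integral>x. 0 \<partial>M)"
  proof (rule integral_dominated_convergence[where w="\<lambda>x. 2 * (cmod (b x))\<^sup>2 + 2 * (cmod (g x))\<^sup>2"])
    show "(\<lambda>x. 0::real) \<in> borel_measurable M" by simp
    show "(\<lambda>x. (cmod (G n x - g x))\<^sup>2) \<in> borel_measurable M" for n using GL g by measurable
    show "integrable M (\<lambda>x. 2 * (cmod (b x))\<^sup>2 + 2 * (cmod (g x))\<^sup>2)" using L2_int[OF b] L2_int[OF g] by simp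
    show "AE x in M. (\<lambda>n. (cmod (G n x - g x))\<^sup>2) \<longlonglongrightarrow> 0"
      using lim
    proof eventually_elim
      case (elim x)
      have "(\<lambda>n. G n x - g x) \<longlonglongrightarrow> g x - g x" using elim by (intro tendsto_diff tendsto_const)
      then have "(\<lambda>n. G n x - g x) \<longlonglongrightarrow> 0" by simp
      then have "(\<lambda>n. cmod (G n x - g x)) \<longlonglongrightarrow> 0" by (rule tendsto_norm_zero)
      from tendsto_power[OF this, of 2] show ?case by simp
    qed
    show "AE x in M. norm ((cmod (G n x - g x))\<^sup>2) \<le> 2 * (cmod (b x))\<^sup>2 + 2 * (cmod (g x))\<^sup>2" for n
      using bound[of n]
    proof eventually_elim
      case (elim x)
      have "cmod (G n x - g x) \<le> cmod (b x) + cmod (g x)" using norm_triangle_ineq4[of "G n x" "g x"] elim by linarith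
      then have "(cmod (G n x - g x))\<^sup>2 \<le> (cmod (b x) + cmod (g x))\<^sup>2" by (intro power_mono) auto
      also have "\<dots> \<le> 2 * (cmod (b x))\<^sup>2 + 2 * (cmod (g x))\<^sup>2"
        by (rule sq_sum_le)
      finally show ?case by simp
    qed
  qed
  then have "(\<lambda>n. \<integral>x. (cmod (G n x - g x))\<^sup>2 \<partial>M) \<longlonglongrightarrow> 0" by simp
  then show ?thesis using V G g unfolding closed_subspace_def by blast
qed

lemma CS_ae:
  assumes g: "g \<in> V" and h: "h \<in> L2 M" and ae: "AE x in M. g x = h x"
  shows "h \<in> V"
  by (rule CS_lim[where G="\<lambda>n. g" and b=h, OF g h h]) (use ae in \<open>eventually_elim, simp\<close>)+

lemma CS_sum:
  assumes "finite C" "\<And>c. c \<in> C \<Longrightarrow> h c \<in> V"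
  shows "(\<lambda>x. \<Sum>c\<in>C. h c x) \<in> V"
  using assms
proof (induction C rule: finite_induct)
  case empty then show ?case using CS_zero by simp
next
  case (insert c C)
  then show ?case using CS_add[of "h c" "\<lambda>x. \<Sum>c\<in>C. h c x"] by simp
qed

end



locale setting = kgl d r s cmp for d :: "'p \<Rightarrow> ('k::finite \<Rightarrow> nat)" and r s cmp +
  fixes M :: "(('k \<Rightarrow> nat) \<Rightarrow> ('k \<Rightarrow> nat) \<Rightarrow> 'p) measure"
    and f :: "'p \<Rightarrow> (('k \<Rightarrow> nat) \<Rightarrow> ('k \<Rightarrow> nat) \<Rightarrow> 'p) \<Rightarrow> complex"
  assumes space_M: "space M = infpaths d r s cmp"
    and sets_M: "sets M = sigma_sets (infpaths d r s cmp) (range (cyl d r s cmp))"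
    and radon: "\<forall>l. emeasure M (cyl d r s cmp l) < \<infinity>"
    and proj: "projective_system d r s cmp M f"
begin

abbreviation "Z \<equiv> cyl d r s cmp"
abbreviation "tau \<equiv> prefix d r s cmp"
abbreviation "Dl l \<equiv> Z (s l)"
abbreviation "W l \<equiv> tau l ` Dl l"
abbreviation "fsq l x \<equiv> (cmod (f l x))\<^sup>2"

lemma cyl_sets[measurable]: "Z l \<in> sets M"
  unfolding sets_M by (rule sigma_sets.Basic) simp

lemma cyl_space: "Z l \<subseteq> space M"
  unfolding space_M cyl_def by auto

lemma cyl_fin: "emeasure M (Z l) < \<infinity>" using radon by simp

lemma sb: "semibranching M {l'. d l' = d l} (\<lambda>l. Z (s l)) tau (shift (d l))"
  using proj unfolding projective_system_def by blast

lemma shift_meas[measurable]: "shift n \<in> measurable M M"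
  using proj unfolding projective_system_def semibranching_def by (elim conjE allE) assumption



lemma tau_cyl: "y \<in> Dl l \<Longrightarrow> tau l y \<in> Z l" and shift_tau: "y \<in> Dl l \<Longrightarrow> shift (d l) (tau l y) = y"
  using prefix_props by auto

lemma W_cyl: "W l \<subseteq> Z l" using tau_cyl by auto

lemma W_space: "W l \<subseteq> space M" using W_cyl cyl_space by blast

lemma sb_i: "Dl l \<in> sets M \<and> 0 < emeasure M (Dl l) \<and> emeasure M (Dl l) < \<infinity> \<and>
        tau l \<in> measurable (restrict_space M (Dl l)) M \<and>
        (\<forall>A\<in>sets M. A \<subseteq> Dl l \<longrightarrow> tau l ` A \<in> sets M) \<and>
        emeasure M (tau l ` Dl l) < \<infinity> \<and>
        (\<forall>x\<in>Dl l. shift (d l) (tau l x) = x) \<and>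
        (\<exists>h\<in>borel_measurable M. (\<forall>x. 0 \<le> h x) \<and> (AE x in M. x \<in> Dl l \<longrightarrow> 0 < h x) \<and>
           (\<forall>A\<in>sets M. A \<subseteq> Dl l \<longrightarrow>
               emeasure M (tau l ` A) = (\<integral>\<^sup>+x\<in>A. ennreal (h x) \<partial>M)))"
proof -
  have "\<forall>i\<in>{l'. d l' = d l}.
        Z (s i) \<in> sets M \<and> 0 < emeasure M (Z (s i)) \<and> emeasure M (Z (s i)) < \<infinity> \<and>
        tau i \<in> measurable (restrict_space M (Z (s i))) M \<and>
        (\<forall>A\<in>sets M. A \<subseteq> Z (s i) \<longrightarrow> tau i ` A \<in> sets M) \<and>
        emeasure M (tau i ` Z (s i)) < \<infinity> \<and>
        (\<forall>x\<in>Z (s i). shift (d l) (tau i x) = x) \<and>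
        (\<exists>h\<in>borel_measurable M. (\<forall>x. 0 \<le> h x) \<and> (AE x in M. x \<in> Z (s i) \<longrightarrow> 0 < h x) \<and>
           (\<forall>A\<in>sets M. A \<subseteq> Z (s i) \<longrightarrow>
               emeasure M (tau i ` A) = (\<integral>\<^sup>+x\<in>A. ennreal (h x) \<partial>M)))"
    using sb[of l, unfolded semibranching_def] by (elim conjE)
  then show ?thesis by (rule bspec) simp
qed

lemma rho: "\<exists>h\<in>borel_measurable M. \<forall>A\<in>sets M. A \<subseteq> Dl l \<longrightarrow> emeasure M (tau l ` A) = (\<integral>\<^sup>+x\<in>A. ennreal (h x) \<partial>M)"
  using sb_i[of l] by (elim conjE bexE) (rule bexI, assumption+)

lemma tau_meas: "tau l \<in> measurable (restrict_space M (Dl l)) M"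
  using sb_i[of l] by (elim conjE)

lemma tau_img_sets: "A \<in> sets M \<Longrightarrow> A \<subseteq> Dl l \<Longrightarrow> tau l ` A \<in> sets M"
  using sb_i[of l] by (elim conjE) blast

lemma W_sets[measurable]: "W l \<in> sets M"
  using tau_img_sets[of "Dl l" l] by simp

lemma null_img:
  assumes A: "A \<in> sets M" "A \<subseteq> Dl l" "emeasure M A = 0"
  shows "emeasure M (tau l ` A) = 0"
proof -
  obtain h where h: "h \<in> borel_measurable M" "\<forall>A\<in>sets M. A \<subseteq> Dl l \<longrightarrow> emeasure M (tau l ` A) = (\<integral>\<^sup>+x\<in>A. ennreal (h x) \<partial>M)"
    using rho by blast
  have "A \<in> null_sets M" using A by auto
  then show ?thesis using h A nn_integral_null_set[of A M "\<lambda>x. ennreal (h x)"] by simp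
qed

lemma sbn: "semibranching M {l'. d l' = n} (\<lambda>l. Z (s l)) tau (shift n)"
  using proj unfolding projective_system_def by blast

lemma cover: "emeasure M (space M - (\<Union>l'\<in>{l'. d l' = n}. W l')) = 0"
  using sbn[of n, unfolded semibranching_def] by (elim conjE)

lemma countable_deg: "countable {l'. d l' = n}"
  using countable_subset[OF subset_UNIV cnt] .

lemma cover_null: "space M - (\<Union>l'\<in>{l'. d l' = n}. W l') \<in> null_sets M"
proof -
  have "(\<Union>l'\<in>{l'. d l' = n}. W l') \<in> sets M"
    by (intro sets.countable_UN'' countable_deg) auto
  then show ?thesis using cover[of n] by auto
qed

lemma f_meas[measurable]: "f l \<in> borel_measurable M"
  using proj unfolding projective_system_def by blast

lemma f_int: "integrable M (\<lambda>x. fsq l x)"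
  using proj unfolding projective_system_def by blast

lemma f_P: "A \<in> sets M \<Longrightarrow> emeasure M (tau l -` A \<inter> Dl l) = (\<integral>\<^sup>+x\<in>A. ennreal (fsq l x) \<partial>M)"
  using proj unfolding projective_system_def by blast

lemma Dl_int: "Dl l \<inter> space M \<in> sets M" by simp

lemma distr_eq: "distr (restrict_space M (Dl l)) M (tau l) = density M (\<lambda>x. ennreal (fsq l x))"
proof (rule measure_eqI)
  show "sets (distr (restrict_space M (Dl l)) M (tau l)) = sets (density M (\<lambda>x. ennreal (fsq l x)))" by simp
  fix A assume "A \<in> sets (distr (restrict_space M (Dl l)) M (tau l))"
  then have A: "A \<in> sets M" by simp
  have sp: "space (restrict_space M (Dl l)) = Dl l" using cyl_space by (simp add: space_restrict_space Int_absorb2)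
  have "tau l -` A \<inter> Dl l \<in> sets (restrict_space M (Dl l))"
    using measurable_sets[OF tau_meas A] sp by simp
  then have "tau l -` A \<inter> Dl l \<in> sets M" using sets_restrict_space_iff[OF Dl_int] by blast
  have "emeasure (distr (restrict_space M (Dl l)) M (tau l)) A = emeasure (restrict_space M (Dl l)) (tau l -` A \<inter> Dl l)"
    using emeasure_distr[OF tau_meas A] sp by simp
  also have "\<dots> = emeasure M (tau l -` A \<inter> Dl l)"
    by (rule emeasure_restrict_space[OF Dl_int]) auto
  also have "\<dots> = (\<integral>\<^sup>+x\<in>A. ennreal (fsq l x) \<partial>M)" by (rule f_P[OF A])
  also have "\<dots> = emeasure (density M (\<lambda>x. ennreal (fsq l x))) A"
    using A by (simp add: emeasure_density)
  finally show "emeasure (distr (restrict_space M (Dl l)) M (tau l)) A = emeasure (density M (\<lambda>x. ennreal (fsq l x))) A" .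
qed

lemma cv_nn:
  assumes g[measurable]: "g \<in> borel_measurable M"
  shows "(\<integral>\<^sup>+y. g (tau l y) * indicator (Dl l) y \<partial>M) = (\<integral>\<^sup>+x. ennreal (fsq l x) * g x \<partial>M)"
proof -
  have "(\<integral>\<^sup>+y. g (tau l y) * indicator (Dl l) y \<partial>M) = (\<integral>\<^sup>+y. g (tau l y) \<partial>restrict_space M (Dl l))"
    by (rule nn_integral_restrict_space[OF Dl_int, symmetric])
  also have "\<dots> = (\<integral>\<^sup>+x. g x \<partial>distr (restrict_space M (Dl l)) M (tau l))"
    by (rule nn_integral_distr[OF tau_meas, symmetric]) simp
  also have "\<dots> = (\<integral>\<^sup>+x. ennreal (fsq l x) * g x \<partial>M)"
    unfolding distr_eq by (rule nn_integral_density) simp_all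
  finally show ?thesis .
qed

lemma cv_int:
  fixes psi :: "_ \<Rightarrow> complex"
  assumes psi[measurable]: "psi \<in> borel_measurable M"
  shows "(\<integral>y. indicator (Dl l) y *\<^sub>R psi (tau l y) \<partial>M) = (\<integral>x. fsq l x *\<^sub>R psi x \<partial>M)"
proof -
  have "(\<integral>y. indicator (Dl l) y *\<^sub>R psi (tau l y) \<partial>M) = (\<integral>y. psi (tau l y) \<partial>restrict_space M (Dl l))"
    by (rule integral_restrict_space[OF Dl_int, symmetric])
  also have "\<dots> = (\<integral>x. psi x \<partial>distr (restrict_space M (Dl l)) M (tau l))"
    by (rule integral_distr[OF tau_meas, symmetric]) simp
  also have "\<dots> = (\<integral>x. fsq l x *\<^sub>R psi x \<partial>M)"
    unfolding distr_eq by (rule integral_density) simp_all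
  finally show ?thesis .
qed

lemma sigma_finite: "sigma_finite_measure M"
proof
  show "\<exists>A. countable A \<and> A \<subseteq> sets M \<and> \<Union> A = space M \<and> (\<forall>a\<in>A. emeasure M a \<noteq> \<infinity>)"
  proof (intro exI[of _ "range Z"] conjI)
    show "countable (range Z)" using cnt by simp
    show "range Z \<subseteq> sets M" by auto
    show "\<Union> (range Z) = space M"
      using cyl_space in_cyl_vertex space_M by blast
    show "\<forall>a\<in>range Z. emeasure M a \<noteq> \<infinity>" using cyl_fin by (auto simp: less_top)
  qed
qed

end


context setting begin

definition Adj :: "'p \<Rightarrow> ((('k \<Rightarrow> nat) \<Rightarrow> ('k \<Rightarrow> nat) \<Rightarrow> 'p) \<Rightarrow> complex) \<Rightarrow> ((('k \<Rightarrow> nat) \<Rightarrow> ('k \<Rightarrow> nat) \<Rightarrow> 'p) \<Rightarrow> complex)" where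
  "Adj l g = (\<lambda>y. indicator (Dl l) y *\<^sub>R (g (tau l y) / f l (tau l y)))"

lemma tau_pre_sets: "A \<in> sets M \<Longrightarrow> tau l -` A \<inter> Dl l \<in> sets M"
proof -
  assume A: "A \<in> sets M"
  have sp: "space (restrict_space M (Dl l)) = Dl l" using cyl_space by (simp add: space_restrict_space Int_absorb2)
  have "tau l -` A \<inter> Dl l \<in> sets (restrict_space M (Dl l))"
    using measurable_sets[OF tau_meas A] sp by simp
  then show ?thesis using sets_restrict_space_iff[OF Dl_int] by blast
qed

lemma tau_space: "y \<in> Dl l \<Longrightarrow> tau l y \<in> space M"
  using tau_cyl cyl_space by blast

lemma shift_space: "x \<in> space M \<Longrightarrow> shift n x \<in> space M"
  using measurable_space[OF shift_meas] .

lemma W_inv: "x \<in> W l \<Longrightarrow> shift (d l) x \<in> Dl l \<and> tau l (shift (d l) x) = x"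
  using shift_tau by auto

lemma Q1: "AE x in M. f l x \<noteq> 0 \<longrightarrow> x \<in> W l"
proof -
  have A: "space M - W l \<in> sets M" by auto
  have "tau l -` (space M - W l) \<inter> Dl l = {}" by auto
  then have "(\<integral>\<^sup>+x\<in>space M - W l. ennreal (fsq l x) \<partial>M) = 0" using f_P[OF A, of l] by simp
  then have "AE x in M. ennreal (fsq l x) * indicator (space M - W l) x = 0"
    by (subst nn_integral_0_iff_AE[symmetric]) auto
  with AE_space show ?thesis by eventually_elim (auto simp: indicator_def)
qed

lemma Q3set: "tau l -` {x\<in>space M. f l x = 0} \<inter> Dl l \<in> null_sets M"
proof -
  have A: "{x\<in>space M. f l x = 0} \<in> sets M" by measurable
  have "(\<integral>\<^sup>+x\<in>{x\<in>space M. f l x = 0}. ennreal (fsq l x) \<partial>M) = (\<integral>\<^sup>+x. 0 \<partial>M)"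
    by (intro nn_integral_cong) (auto simp: indicator_def)
  then show ?thesis using f_P[OF A] tau_pre_sets[OF A] by auto
qed

lemma Q3: "AE y in M. y \<in> Dl l \<longrightarrow> f l (tau l y) \<noteq> 0"
  by (rule AE_I'[OF Q3set]) (auto intro: tau_space)

lemma Q2': "N \<in> null_sets M \<Longrightarrow> AE y in M. y \<in> Dl l \<longrightarrow> tau l y \<notin> N"
proof -
  assume N: "N \<in> null_sets M"
  have "emeasure M (tau l -` N \<inter> Dl l) = (\<integral>\<^sup>+x. ennreal (fsq l x) * indicator N x \<partial>M)"
    using f_P[of N l] N by auto
  also have "\<dots> = 0" by (rule nn_integral_null_set[OF N])
  finally have "tau l -` N \<inter> Dl l \<in> null_sets M" using tau_pre_sets[of N l] N by auto
  then show ?thesis by (rule AE_I') auto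
qed

lemma img_null: "N \<in> sets M \<Longrightarrow> N \<subseteq> Dl l \<Longrightarrow> emeasure M N = 0 \<Longrightarrow> tau l ` N \<in> null_sets M"
  using null_img[of N l] tau_img_sets[of N l] by auto

lemma Q5: "AE x in M. x \<in> W l \<longrightarrow> f l x \<noteq> 0"
proof (rule AE_I')
  let ?N = "tau l -` {x\<in>space M. f l x = 0} \<inter> Dl l"
  show "tau l ` ?N \<in> null_sets M"
    using Q3set[of l] by (intro img_null) auto
  show "{x \<in> space M. \<not> (x \<in> W l \<longrightarrow> f l x \<noteq> 0)} \<subseteq> tau l ` ?N"
    by (auto intro: tau_space)
qed

lemma Q2: "N \<in> null_sets M \<Longrightarrow> AE x in M. f l x \<noteq> 0 \<longrightarrow> shift (d l) x \<notin> N"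
proof -
  assume N: "N \<in> null_sets M"
  have "N \<inter> Dl l \<in> null_sets M" using null_set_Int2[OF N] by simp
  then have "tau l ` (N \<inter> Dl l) \<in> null_sets M"
    by (intro img_null) auto
  then have "AE x in M. x \<notin> tau l ` (N \<inter> Dl l)" by (rule AE_not_in)
  then show ?thesis using Q1[of l]
  proof eventually_elim
    case (elim x)
    show ?case
    proof
      assume "f l x \<noteq> 0"
      then have "x \<in> W l" using elim by blast
      then obtain y where y: "y \<in> Dl l" "x = tau l y" by blast
      then have "shift (d l) x = y" using shift_tau by simp
      then show "shift (d l) x \<notin> N" using elim y by auto
    qed
  qed
qed

lemma T_meas[measurable]: assumes g[measurable]: "g \<in> borel_measurable M" shows "Top d f l g \<in> borel_measurable M"
  unfolding Top_def by measurable

lemma T_L2: assumes g: "g \<in> L2 M" shows "Top d f l g \<in> L2 M"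
proof -
  note [measurable] = L2_meas[OF g]
  have "(\<integral>\<^sup>+x. ennreal ((cmod (Top d f l g x))\<^sup>2) \<partial>M) = (\<integral>\<^sup>+x. ennreal (fsq l x) * ennreal ((cmod (g (shift (d l) x)))\<^sup>2) \<partial>M)"
    unfolding Top_def by (intro nn_integral_cong) (simp add: norm_mult power_mult_distrib ennreal_mult)
  also have "\<dots> = (\<integral>\<^sup>+y. ennreal ((cmod (g (shift (d l) (tau l y))))\<^sup>2) * indicator (Dl l) y \<partial>M)"
    by (rule cv_nn[symmetric]) measurable
  also have "\<dots> = (\<integral>\<^sup>+y. ennreal ((cmod (g y))\<^sup>2) * indicator (Dl l) y \<partial>M)"
    by (intro nn_integral_cong) (auto simp: indicator_def shift_tau)
  also have "\<dots> \<le> (\<integral>\<^sup>+y. ennreal ((cmod (g y))\<^sup>2) \<partial>M)"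
    by (intro nn_integral_mono) (auto simp: indicator_def)
  also have "\<dots> < \<infinity>" using g unfolding L2_iff by blast
  finally show ?thesis unfolding L2_iff by simp
qed

lemma Adj_meas[measurable]: assumes g[measurable]: "g \<in> borel_measurable M" shows "Adj l g \<in> borel_measurable M"
proof -
  have "(\<lambda>y. g (tau l y) / f l (tau l y)) \<in> borel_measurable (restrict_space M (Dl l))"
    using measurable_compose[OF tau_meas g] measurable_compose[OF tau_meas f_meas] by (rule borel_measurable_divide)
  from borel_measurable_restrict_space_iff[OF Dl_int[of l], THEN iffD1, OF this] show ?thesis unfolding Adj_def .
qed

lemma Adj_L2: assumes g: "g \<in> L2 M" shows "Adj l g \<in> L2 M"
proof -
  note [measurable] = L2_meas[OF g]
  have "(\<integral>\<^sup>+y. ennreal ((cmod (Adj l g y))\<^sup>2) \<partial>M) = (\<integral>\<^sup>+y. ennreal ((cmod (g (tau l y)))\<^sup>2 / fsq l (tau l y)) * indicator (Dl l) y \<partial>M)"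
    unfolding Adj_def by (intro nn_integral_cong) (auto simp: indicator_def norm_divide power_divide)
  also have "\<dots> = (\<integral>\<^sup>+x. ennreal (fsq l x) * ennreal ((cmod (g x))\<^sup>2 / fsq l x) \<partial>M)"
    by (rule cv_nn) measurable
  also have "\<dots> \<le> (\<integral>\<^sup>+x. ennreal ((cmod (g x))\<^sup>2) \<partial>M)"
  proof (intro nn_integral_mono)
    fix x
    have "fsq l x * ((cmod (g x))\<^sup>2 / fsq l x) \<le> (cmod (g x))\<^sup>2" by (cases "fsq l x = 0") auto
    then show "ennreal (fsq l x) * ennreal ((cmod (g x))\<^sup>2 / fsq l x) \<le> ennreal ((cmod (g x))\<^sup>2)"
      by (simp add: ennreal_mult[symmetric])
  qed
  also have "\<dots> < \<infinity>" using g unfolding L2_iff by blast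
  finally show ?thesis unfolding L2_iff by simp
qed

lemma T_adj:
  assumes u[measurable]: "u \<in> borel_measurable M" and g[measurable]: "g \<in> borel_measurable M"
  shows "l2inner M (Top d f l u) g = l2inner M u (Adj l g)"
proof -
  define psi where "psi x = u (shift (d l) x) * cnj (g x / f l x)" for x
  have psi[measurable]: "psi \<in> borel_measurable M" unfolding psi_def by measurable
  have "l2inner M u (Adj l g) = (\<integral>y. indicator (Dl l) y *\<^sub>R psi (tau l y) \<partial>M)"
    unfolding l2inner_def Adj_def psi_def
    by (intro Bochner_Integration.integral_cong refl) (auto simp: indicator_def shift_tau)
  also have "\<dots> = (\<integral>x. fsq l x *\<^sub>R psi x \<partial>M)" by (rule cv_int[OF psi])
  also have "\<dots> = l2inner M (Top d f l u) g"
    unfolding l2inner_def Top_def psi_def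
  proof (intro Bochner_Integration.integral_cong refl)
    fix x
    show "fsq l x *\<^sub>R (u (shift (d l) x) * cnj (g x / f l x)) = f l x * u (shift (d l) x) * cnj (g x)"
    proof (cases "f l x = 0")
      case True then show ?thesis by simp
    next
      case False
      have e: "complex_of_real (fsq l x) = f l x * cnj (f l x)" by (rule complex_norm_square)
      have "fsq l x *\<^sub>R (u (shift (d l) x) * cnj (g x / f l x)) = complex_of_real (fsq l x) * (u (shift (d l) x) * cnj (g x / f l x))"
        by (rule scaleR_conv_of_real)
      also have "\<dots> = (f l x * cnj (f l x)) * (u (shift (d l) x) * (cnj (g x) / cnj (f l x)))"
        unfolding e complex_cnj_divide ..
      also have "\<dots> = f l x * u (shift (d l) x) * cnj (g x)" using False by (simp add: field_simps)
      finally show ?thesis .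
    qed
  qed
  finally show ?thesis by simp
qed

lemma TA_ae: "AE x in M. Top d f l (Adj l g) x = indicator (W l) x * g x"
  using Q1[of l] Q5[of l]
proof eventually_elim
  case (elim x)
  show ?case
  proof (cases "x \<in> W l")
    case True
    then have "shift (d l) x \<in> Dl l" "tau l (shift (d l) x) = x" using W_inv by auto
    then show ?thesis using True elim unfolding Top_def Adj_def by simp
  next
    case False
    then show ?thesis using elim unfolding Top_def Adj_def by simp
  qed
qed

lemma AT_ae: "AE y in M. Adj l (Top d f l g) y = indicator (Dl l) y * g y"
  using Q3[of l]
proof eventually_elim
  case (elim y)
  then show ?case unfolding Top_def Adj_def by (cases "y \<in> Dl l") (auto simp: shift_tau)
qed

lemma T_cong:
  assumes "AE x in M. g x = g' x"
  shows "AE x in M. Top d f l g x = Top d f l g' x"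
proof -
  from assms obtain N where N: "{x \<in> space M. \<not> g x = g' x} \<subseteq> N" "emeasure M N = 0" "N \<in> sets M" by (rule AE_E)
  then have "N \<in> null_sets M" by auto
  from Q2[OF this, of l] show ?thesis
  proof (rule AE_mp, intro AE_I2 impI)
    fix x assume x: "x \<in> space M" "f l x \<noteq> 0 \<longrightarrow> shift (d l) x \<notin> N"
    show "Top d f l g x = Top d f l g' x"
      using x N(1) shift_space[OF x(1), of "d l"] unfolding Top_def by (cases "f l x = 0") auto
  qed
qed

lemma Adj_cong:
  assumes "AE x in M. g x = g' x"
  shows "AE x in M. Adj l g x = Adj l g' x"
proof -
  from assms obtain N where N: "{x \<in> space M. \<not> g x = g' x} \<subseteq> N" "emeasure M N = 0" "N \<in> sets M" by (rule AE_E)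
  then have "N \<in> null_sets M" by auto
  from Q2'[OF this, of l] show ?thesis
  proof (rule AE_mp, intro AE_I2 impI)
    fix y assume y: "y \<in> space M" "y \<in> Dl l \<longrightarrow> tau l y \<notin> N"
    show "Adj l g y = Adj l g' y"
      using y N(1) tau_space[of y l] unfolding Adj_def by (cases "y \<in> Dl l") auto
  qed
qed

lemma T_supp:
  assumes "AE x in M. x \<notin> B \<longrightarrow> g x = 0"
  shows "AE x in M. Top d f l g x \<noteq> 0 \<longrightarrow> x \<in> W l \<and> shift (d l) x \<in> B"
proof -
  from assms obtain N where N: "{x \<in> space M. \<not> (x \<notin> B \<longrightarrow> g x = 0)} \<subseteq> N" "emeasure M N = 0" "N \<in> sets M" by (rule AE_E)
  then have "N \<in> null_sets M" by auto
  from AE_space Q2[OF this, of l] Q1[of l] show ?thesis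
  proof (eventually_elim)
    case (elim x)
    show ?case
    proof
      assume "Top d f l g x \<noteq> 0"
      then have "f l x \<noteq> 0" "g (shift (d l) x) \<noteq> 0" unfolding Top_def by auto
      then show "x \<in> W l \<and> shift (d l) x \<in> B"
        using elim N(1) shift_space[OF elim(1), of "d l"] by auto
    qed
  qed
qed

lemma Adj_supp:
  assumes "AE x in M. x \<notin> B \<longrightarrow> g x = 0"
  shows "AE y in M. Adj l g y \<noteq> 0 \<longrightarrow> y \<in> Dl l \<and> tau l y \<in> B"
proof -
  from assms obtain N where N: "{x \<in> space M. \<not> (x \<notin> B \<longrightarrow> g x = 0)} \<subseteq> N" "emeasure M N = 0" "N \<in> sets M" by (rule AE_E)
  then have "N \<in> null_sets M" by auto
  from AE_space Q2'[OF this, of l] show ?thesis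
  proof (eventually_elim)
    case (elim y)
    show ?case
    proof
      assume "Adj l g y \<noteq> 0"
      then have "y \<in> Dl l" "g (tau l y) \<noteq> 0" unfolding Adj_def by (auto simp: indicator_def split: if_splits)
      then show "y \<in> Dl l \<and> tau l y \<in> B"
        using elim N(1) tau_space[of y l] by auto
    qed
  qed
qed

end


lemma L2_onI: "g \<in> L2 M \<Longrightarrow> (AE x in M. x \<notin> A \<longrightarrow> g x = 0) \<Longrightarrow> g \<in> L2_on M A"
  unfolding L2_on_def by blast

lemma L2_onD: "g \<in> L2_on M A \<Longrightarrow> g \<in> L2 M" and L2_onD2: "g \<in> L2_on M A \<Longrightarrow> AE x in M. x \<notin> A \<longrightarrow> g x = 0"
  unfolding L2_on_def by blast+

lemma L2_on_mono: assumes "g \<in> L2_on M A" "A \<subseteq> B" shows "g \<in> L2_on M B"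
proof (rule L2_onI[OF L2_onD[OF assms(1)]])
  show "AE x in M. x \<notin> B \<longrightarrow> g x = 0"
    using L2_onD2[OF assms(1)] by (rule eventually_mono) (use assms(2) in auto)
qed

locale setE = setting +
  fixes E
  assumes minE: "minimal_mu_invariant M E"
begin

lemma E_inv: "mu_invariant M E" using minE unfolding minimal_mu_invariant_def by blast

lemma E_sets[measurable]: "E \<in> sets M" using E_inv unfolding mu_invariant_def by blast

lemma E_pos: "emeasure M E \<noteq> 0" using E_inv unfolding mu_invariant_def by blast

lemma inv_null:
  assumes "mu_invariant M A"
  shows "A - (shift n -` A \<inter> space M) \<in> null_sets M" "(shift n -` A \<inter> space M) - A \<in> null_sets M"
proof -
  have A[measurable]: "A \<in> sets M" using assms unfolding mu_invariant_def by blast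
  have U: "(A - (shift n -` A \<inter> space M)) \<union> ((shift n -` A \<inter> space M) - A) \<in> null_sets M"
    using assms unfolding mu_invariant_def by auto
  show "A - (shift n -` A \<inter> space M) \<in> null_sets M"
    by (rule null_sets_subset[OF U]) auto
  show "(shift n -` A \<inter> space M) - A \<in> null_sets M"
    by (rule null_sets_subset[OF U]) auto
qed

lemma part1a:
  assumes g: "g \<in> L2_on M E"
  shows "Top d f l g \<in> L2_on M E"
proof (rule L2_onI)
  show "Top d f l g \<in> L2 M" using T_L2 L2_onD[OF g] by blast
  have N: "(shift (d l) -` E \<inter> space M) - E \<in> null_sets M" using inv_null[OF E_inv] by blast
  from AE_space T_supp[OF L2_onD2[OF g], of l] AE_not_in[OF N]
  show "AE x in M. x \<notin> E \<longrightarrow> Top d f l g x = 0"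
    by eventually_elim auto
qed

lemma part1b:
  assumes g: "g \<in> L2_on M E"
  shows "Adj l g \<in> L2_on M E"
proof (rule L2_onI)
  show "Adj l g \<in> L2 M" using Adj_L2 L2_onD[OF g] by blast
  have N: "E - (shift (d l) -` E \<inter> space M) \<in> null_sets M" using inv_null[OF E_inv] by blast
  from AE_space Adj_supp[OF L2_onD2[OF g], of l] Q2'[OF N, of l]
  show "AE x in M. x \<notin> E \<longrightarrow> Adj l g x = 0"
  proof eventually_elim
    case (elim y)
    show ?case
    proof (rule impI, rule ccontr)
      assume "y \<notin> E" "Adj l g y \<noteq> 0"
      then have y: "y \<in> Dl l" "tau l y \<in> E" using elim by auto
      then have "tau l y \<in> space M" using tau_space by blast
      then have "shift (d l) (tau l y) \<in> E" using y elim by auto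
      then show False using shift_tau[OF y(1)] \<open>y \<notin> E\<close> by simp
    qed
  qed
qed

lemma part1c: "adj_invariant M (L2 M) (Top d f l) (L2_on M E)"
  unfolding adj_invariant_def
proof
  fix g assume g: "g \<in> L2_on M E"
  show "\<exists>h\<in>L2_on M E. \<forall>u\<in>L2 M. l2inner M (Top d f l u) g = l2inner M u h"
  proof (intro bexI[of _ "Adj l g"] ballI)
    fix u assume "u \<in> L2 M"
    then show "l2inner M (Top d f l u) g = l2inner M u (Adj l g)"
      using L2_onD[OF g] by (intro T_adj) (auto dest: L2_meas)
  qed (rule part1b[OF g])
qed

lemma space_cover: "space M = (\<Union>l. Z l)"
proof
  show "space M \<subseteq> (\<Union>l. Z l)"
  proof
    fix x assume "x \<in> space M"
    then have "x \<in> Z (x 0 0)" using in_cyl_vertex space_M by simp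
    then show "x \<in> (\<Union>l. Z l)" by blast
  qed
  show "(\<Union>l. Z l) \<subseteq> space M" using cyl_space by blast
qed

lemma null_by_cyl:
  assumes A: "A \<in> sets M" and h: "\<And>l. A \<inter> Z l \<in> null_sets M"
  shows "A \<in> null_sets M"
proof -
  have "A = (\<Union>l\<in>UNIV. A \<inter> Z l)" using sets.sets_into_space[OF A] space_cover by blast
  also have "\<dots> \<in> null_sets M" by (rule null_sets_UN'[OF cnt]) (use h in auto)
  finally show ?thesis .
qed

lemma part2: "\<exists>g\<in>L2_on M E. \<not> (AE x in M. g x = 0)"
proof -
  obtain l where l: "E \<inter> Z l \<notin> null_sets M"
    using null_by_cyl[OF E_sets] E_pos by auto
  define g :: "_ \<Rightarrow> complex" where "g = indicator (E \<inter> Z l)"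
  have "emeasure M (E \<inter> Z l) \<le> emeasure M (Z l)" by (intro emeasure_mono) auto
  then have fin: "emeasure M (E \<inter> Z l) < \<infinity>" using cyl_fin[of l] by simp
  have "g \<in> L2_on M E"
    unfolding g_def by (rule L2_onI[OF L2_indicator]) (use fin in auto)
  moreover have "\<not> (AE x in M. g x = 0)"
  proof
    assume "AE x in M. g x = 0"
    then have ae: "AE x in M. x \<notin> E \<inter> Z l" unfolding g_def by (rule eventually_mono) (auto simp: indicator_def split: if_splits)
    have eq: "{x\<in>space M. \<not> (x \<notin> E \<inter> Z l)} = E \<inter> Z l" using sets.sets_into_space[OF E_sets] by blast
    have "emeasure M (E \<inter> Z l) = 0"
      using AE_iff_measurable[OF _ eq] ae by simp
    then show False using l by auto
  qed
  ultimately show ?thesis by blast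
qed

end


locale irr = setE +
  fixes V
  assumes CSV: "closed_subspace M V" and VE: "V \<subseteq> L2_on M E"
    and VT: "\<And>l g. g \<in> V \<Longrightarrow> Top d f l g \<in> V"
    and VA: "\<And>l. adj_invariant M (L2_on M E) (Top d f l) V"
begin

lemma V_L2: "g \<in> V \<Longrightarrow> g \<in> L2 M" using CS_L2[OF CSV] .
lemma V_ae: "g \<in> V \<Longrightarrow> h \<in> L2 M \<Longrightarrow> AE x in M. g x = h x \<Longrightarrow> h \<in> V" using CS_ae[OF CSV] .

lemma V_Adj:
  assumes g: "g \<in> V"
  shows "Adj l g \<in> V"
proof -
  obtain h where h: "h \<in> V" "\<And>u. u \<in> L2_on M E \<Longrightarrow> l2inner M (Top d f l u) g = l2inner M u h"
    using VA[of l] g unfolding adj_invariant_def by blast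
  have gE: "g \<in> L2_on M E" using g VE by blast
  have hE: "h \<in> L2_on M E" using h(1) VE by blast
  have aE: "Adj l g \<in> L2_on M E" by (rule part1b[OF gE])
  define del where "del = (\<lambda>x. h x - Adj l g x)"
  have delE: "del \<in> L2_on M E"
  proof (rule L2_onI)
    show "del \<in> L2 M" unfolding del_def using L2_diff L2_onD hE aE by blast
    show "AE x in M. x \<notin> E \<longrightarrow> del x = 0"
      using L2_onD2[OF hE] L2_onD2[OF aE] unfolding del_def by eventually_elim auto
  qed
  have dL: "del \<in> L2 M" using L2_onD[OF delE] .
  have "l2inner M del h = l2inner M (Top d f l del) g" using h(2)[OF delE] by simp
  also have "\<dots> = l2inner M del (Adj l g)"
    using dL L2_onD[OF gE] by (intro T_adj) (auto dest: L2_meas)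
  finally have e: "l2inner M del h = l2inner M del (Adj l g)" .
  have "l2inner M del del = l2inner M del h - l2inner M del (Adj l g)"
    unfolding del_def using dL L2_onD[OF hE] L2_onD[OF aE] by (intro l2inner_diff_right) (auto simp: del_def)
  then have "l2inner M del del = 0" using e by simp
  then have "AE x in M. del x = 0" by (rule l2inner_self_zero[OF dL])
  then have "AE x in M. h x = Adj l g x" unfolding del_def by (auto elim: eventually_mono)
  then show ?thesis using h(1) L2_onD[OF aE] V_ae by blast
qed

lemma V_W: "g \<in> V \<Longrightarrow> (\<lambda>x. indicator (W l) x * g x) \<in> V"
proof -
  assume g: "g \<in> V"
  have "Top d f l (Adj l g) \<in> V" using VT V_Adj g by blast
  moreover have "(\<lambda>x. indicator (W l) x * g x) \<in> L2 M" using L2_indicator_mult[OF V_L2[OF g]] by simp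
  ultimately show ?thesis using TA_ae V_ae by blast
qed

lemma cyl_minus_W: "Z l - W l \<in> null_sets M"
proof (rule null_sets_subset[OF cover_null[of "d l"]])
  show "Z l - W l \<in> sets M" by auto
  show "Z l - W l \<subseteq> space M - (\<Union>l'\<in>{l'. d l' = d l}. W l')"
  proof
    fix x assume x: "x \<in> Z l - W l"
    have "x \<notin> W l'" if "d l' = d l" for l'
    proof
      assume "x \<in> W l'"
      then have "x \<in> Z l'" using W_cyl by blast
      then have "l = l'" using cyl_disj x that by auto
      then show False using x \<open>x \<in> W l'\<close> by simp
    qed
    then show "x \<in> space M - (\<Union>l'\<in>{l'. d l' = d l}. W l')" using x cyl_space by auto
  qed
qed

lemma V_cyl: "g \<in> V \<Longrightarrow> (\<lambda>x. indicator (Z l) x * g x) \<in> V"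
proof -
  assume g: "g \<in> V"
  have "AE x in M. x \<notin> Z l - W l" using AE_not_in[OF cyl_minus_W] .
  then have "AE x in M. indicator (W l) x * g x = indicator (Z l) x * g x"
    by eventually_elim (use W_cyl in \<open>auto simp: indicator_def\<close>)
  moreover have "(\<lambda>x. indicator (Z l) x * g x) \<in> L2 M" using L2_indicator_mult[OF V_L2[OF g]] by simp
  ultimately show ?thesis using V_W[OF g] V_ae by blast
qed

definition "CC = {A \<in> sets M. \<forall>g\<in>V. (\<lambda>x. indicator A x * g x) \<in> V}"

lemma CC_int: "A \<in> CC \<Longrightarrow> B \<in> CC \<Longrightarrow> A \<inter> B \<in> CC"
  unfolding CC_def
proof (clarsimp)
  fix g assume A: "A \<in> sets M" "\<forall>g\<in>V. (\<lambda>x. indicator A x * g x) \<in> V"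
    and B: "B \<in> sets M" "\<forall>g\<in>V. (\<lambda>x. indicator B x * g x) \<in> V" and g: "g \<in> V"
  have "(\<lambda>x. indicator B x * g x) \<in> V" using B(2) g by blast
  from A(2)[rule_format, OF this] have "(\<lambda>x. indicator A x * (indicator B x * g x)) \<in> V" .
  moreover have "(\<lambda>x. indicator A x * (indicator B x * g x)) = (\<lambda>x. indicator (A \<inter> B) x * g x)"
    by (auto simp: indicator_def fun_eq_iff)
  ultimately show "(\<lambda>x. indicator (A \<inter> B) x * g x) \<in> V" by simp
qed

lemma CC_compl: "A \<in> CC \<Longrightarrow> space M - A \<in> CC"
  unfolding CC_def
proof (clarsimp)
  fix g assume A: "A \<in> sets M" "\<forall>g\<in>V. (\<lambda>x. indicator A x * g x) \<in> V" and g: "g \<in> V"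
  have "(\<lambda>x. g x - indicator A x * g x) \<in> V" using CS_diff[OF CSV] A g by blast
  moreover have "(\<lambda>x. indicator (space M - A) x * g x) \<in> L2 M" using L2_indicator_mult[OF V_L2[OF g]] A by simp
  moreover have "AE x in M. g x - indicator A x * g x = indicator (space M - A) x * g x"
    by (intro AE_I2) (auto simp: indicator_def)
  ultimately show "(\<lambda>x. indicator (space M - A) x * g x) \<in> V" using V_ae by blast
qed

lemma CC_empty: "{} \<in> CC"
  unfolding CC_def using CS_zero[OF CSV] by simp

lemma CC_sub: "A \<in> CC \<Longrightarrow> A \<subseteq> space M"
  unfolding CC_def using sets.sets_into_space by blast

lemma CC_un: "A \<in> CC \<Longrightarrow> B \<in> CC \<Longrightarrow> A \<union> B \<in> CC"
proof -
  assume A: "A \<in> CC" and B: "B \<in> CC"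
  have "space M - ((space M - A) \<inter> (space M - B)) \<in> CC" using A B by (intro CC_compl CC_int)
  moreover have "space M - ((space M - A) \<inter> (space M - B)) = A \<union> B" using CC_sub[OF A] CC_sub[OF B] by blast
  ultimately show ?thesis by simp
qed

lemma CC_Union: assumes A: "\<And>i::nat. A i \<in> CC" shows "(\<Union>i. A i) \<in> CC"
proof -
  define U where "U k = (\<Union>i<k. A i)" for k
  have U: "U k \<in> CC" for k
  proof (induction k)
    case 0 then show ?case using CC_empty by (simp add: U_def)
  next
    case (Suc k)
    have "U (Suc k) = U k \<union> A k" by (auto simp: U_def lessThan_Suc)
    then show ?case using CC_un[OF Suc A] by simp
  qed
  have sets: "(\<Union>i. A i) \<in> sets M" using A unfolding CC_def by auto
  show ?thesis unfolding CC_def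
  proof (intro CollectI conjI ballI sets)
    fix g assume g: "g \<in> V"
    show "(\<lambda>x. indicator (\<Union>i. A i) x * g x) \<in> V"
    proof (rule CS_lim[OF CSV, where G="\<lambda>k x. indicator (U k) x * g x" and b=g])
      show "(\<lambda>x. indicator (U k) x * g x) \<in> V" for k using U[of k] g unfolding CC_def by blast
      show "(\<lambda>x. indicator (\<Union>i. A i) x * g x) \<in> L2 M" using L2_indicator_mult[OF V_L2[OF g] sets] by simp
      show "g \<in> L2 M" by (rule V_L2[OF g])
      show "AE x in M. cmod (indicator (U k) x * g x) \<le> cmod (g x)" for k
        by (intro AE_I2) (auto simp: indicator_def)
      show "AE x in M. (\<lambda>k. indicator (U k) x * g x) \<longlonglongrightarrow> indicator (\<Union>i. A i) x * g x"
      proof (intro AE_I2)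
        fix x
        show "(\<lambda>k. indicator (U k) x * g x) \<longlonglongrightarrow> indicator (\<Union>i. A i) x * g x"
        proof (cases "x \<in> (\<Union>i. A i)")
          case True
          then obtain i where "x \<in> A i" by blast
          then have "\<forall>k\<ge>Suc i. indicator (U k) x * g x = indicator (\<Union>i. A i) x * g x"
            using True by (auto simp: U_def indicator_def)
          then show ?thesis by (intro tendsto_eventually) (auto simp: eventually_sequentially)
        next
          case False
          then have e: "indicator (U k) x * g x = indicator (\<Union>i. A i) x * g x" for k
            by (auto simp: U_def indicator_def)
          show ?thesis unfolding e by (rule tendsto_const)
        qed
      qed
    qed
  qed
qed

lemma CC_sigma: "sigma_algebra (space M) CC"
  unfolding sigma_algebra_iff2
proof (intro conjI allI impI ballI)
  show "CC \<subseteq> Pow (space M)" using CC_sub by blast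
  show "{} \<in> CC" by (rule CC_empty)
  show "space M - s \<in> CC" if "s \<in> CC" for s using CC_compl that .
  show "(\<Union>i. A i) \<in> CC" if "range A \<subseteq> CC" for A :: "nat \<Rightarrow> _"
    by (rule CC_Union) (use that in blast)
qed

lemma V_mult: assumes A: "A \<in> sets M" and g: "g \<in> V" shows "(\<lambda>x. indicator A x * g x) \<in> V"
proof -
  have "range Z \<subseteq> CC" unfolding CC_def using V_cyl by auto
  then have "sigma_sets (space M) (range Z) \<subseteq> CC" by (rule sigma_algebra.sigma_sets_subset[OF CC_sigma])
  then have "sets M \<subseteq> CC" unfolding sets_M using space_M by simp
  then show ?thesis using A g unfolding CC_def by blast
qed

end


context irr begin

lemma V_bounded:
  assumes g: "g \<in> V" and phi[measurable]: "phi \<in> borel_measurable M"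
    and K: "\<And>x. x \<in> space M \<Longrightarrow> cmod (phi x) \<le> K"
  shows "(\<lambda>x. phi x * g x) \<in> V"
proof -
  obtain F where F: "\<And>i. simple_function M (F i)" "\<And>x. x \<in> space M \<Longrightarrow> (\<lambda>i. F i x) \<longlonglongrightarrow> phi x"
    "\<And>i x. x \<in> space M \<Longrightarrow> dist (F i x) 0 \<le> 2 * dist (phi x) 0"
    using borel_measurable_implies_sequence_metric[OF phi, of 0] by blast
  have gL: "g \<in> L2 M" by (rule V_L2[OF g])
  have Fm: "F i \<in> borel_measurable M" for i using borel_measurable_simple_function[OF F(1)] .
  have Fb: "cmod (F i x) \<le> 2 * \<bar>K\<bar>" if x: "x \<in> space M" for i x
  proof -
    have "cmod (F i x) \<le> 2 * cmod (phi x)" using F(3)[OF x, of i] by simp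
    also have "\<dots> \<le> 2 * \<bar>K\<bar>" using K[OF x] by simp
    finally show ?thesis .
  qed
  have FV: "(\<lambda>x. F i x * g x) \<in> V" for i
  proof -
    let ?R = "F i ` space M"
    have "(\<lambda>x. \<Sum>c\<in>?R. c * (indicator (F i -` {c} \<inter> space M) x * g x)) \<in> V"
    proof (rule CS_sum[OF CSV])
      show "finite ?R" by (rule simple_functionD(1)[OF F(1)])
      fix c
      have "(\<lambda>x. indicator (F i -` {c} \<inter> space M) x * g x) \<in> V"
        by (rule V_mult[OF simple_functionD(2)[OF F(1)] g])
      then show "(\<lambda>x. c * (indicator (F i -` {c} \<inter> space M) x * g x)) \<in> V"
        by (rule CS_cmult[OF CSV])
    qed
    moreover have "(\<lambda>x. F i x * g x) \<in> L2 M" by (rule L2_mult_bounded[OF gL Fm Fb])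
    moreover have "AE x in M. (\<Sum>c\<in>?R. c * (indicator (F i -` {c} \<inter> space M) x * g x)) = F i x * g x"
    proof (rule AE_I2)
      fix x assume x: "x \<in> space M"
      have "F i x = (\<Sum>y\<in>?R. indicator (F i -` {y} \<inter> space M) x *\<^sub>R y)"
        by (rule simple_function_indicator_representation_banach[OF F(1) x])
      then have "F i x * g x = (\<Sum>y\<in>?R. indicator (F i -` {y} \<inter> space M) x *\<^sub>R y) * g x"
        by (rule arg_cong)
      also have "\<dots> = (\<Sum>y\<in>?R. (indicator (F i -` {y} \<inter> space M) x *\<^sub>R y) * g x)"
        by (rule sum_distrib_right)
      also have "\<dots> = (\<Sum>c\<in>?R. c * (indicator (F i -` {c} \<inter> space M) x * g x))"
        by (intro sum.cong refl) (auto simp: indicator_def)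
      finally show "(\<Sum>c\<in>?R. c * (indicator (F i -` {c} \<inter> space M) x * g x)) = F i x * g x"
        by (rule sym)
    qed
    ultimately show ?thesis using V_ae by blast
  qed
  show ?thesis
  proof (rule CS_lim[OF CSV, where G="\<lambda>i x. F i x * g x" and b="\<lambda>x. complex_of_real (2 * \<bar>K\<bar>) * g x"])
    show "(\<lambda>x. F i x * g x) \<in> V" for i by (rule FV)
    show "(\<lambda>x. phi x * g x) \<in> L2 M" by (rule L2_mult_bounded[OF gL phi K])
    show "(\<lambda>x. complex_of_real (2 * \<bar>K\<bar>) * g x) \<in> L2 M" by (rule L2_cmult[OF gL])
    show "AE x in M. (\<lambda>i. F i x * g x) \<longlonglongrightarrow> phi x * g x"
      by (intro AE_I2 tendsto_mult F(2) tendsto_const)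
    show "AE x in M. cmod (F i x * g x) \<le> cmod (complex_of_real (2 * \<bar>K\<bar>) * g x)" for i
    proof (rule AE_I2)
      fix x assume x: "x \<in> space M"
      have "cmod (F i x * g x) = cmod (F i x) * cmod (g x)" by (simp add: norm_mult)
      also have "\<dots> \<le> (2 * \<bar>K\<bar>) * cmod (g x)" by (intro mult_right_mono Fb[OF x]) simp
      finally show "cmod (F i x * g x) \<le> cmod (complex_of_real (2 * \<bar>K\<bar>) * g x)" by (simp add: norm_mult)
    qed
  qed
qed

lemma V_supp:
  assumes g: "g \<in> V" and u: "u \<in> L2_on M {x\<in>space M. g x \<noteq> 0}"
  shows "u \<in> V"
proof -
  have uL: "u \<in> L2 M" by (rule L2_onD[OF u])
  have gL: "g \<in> L2 M" by (rule V_L2[OF g])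
  note [measurable] = L2_meas[OF uL] L2_meas[OF gL]
  define psi where "psi x = u x / g x" for x
  have psim[measurable]: "psi \<in> borel_measurable M" unfolding psi_def by measurable
  define phi where "phi k x = (indicator {x\<in>space M. cmod (psi x) \<le> real k} x :: complex) * psi x" for k :: nat and x
  have phim: "phi k \<in> borel_measurable M" for k unfolding phi_def by measurable
  have phib: "cmod (phi k x) \<le> real k" for k x unfolding phi_def by (auto simp: indicator_def)
  have key: "phi k x * g x = (indicator {x\<in>space M. cmod (psi x) \<le> real k} x :: complex) * u x" if "g x \<noteq> 0" for k x
    using that unfolding phi_def psi_def by simp
  have key0: "phi k x * g x = 0" if "g x = 0" for k x using that by simp
  show ?thesis
  proof (rule CS_lim[OF CSV, where G="\<lambda>k x. phi k x * g x" and b=u])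
    show "(\<lambda>x. phi k x * g x) \<in> V" for k by (rule V_bounded[OF g phim phib])
    show "u \<in> L2 M" by (rule uL)
    show "u \<in> L2 M" by (rule uL)
    show "AE x in M. cmod (phi k x * g x) \<le> cmod (u x)" for k
    proof (rule AE_I2)
      fix x
      show "cmod (phi k x * g x) \<le> cmod (u x)"
        by (cases "g x = 0") (auto simp: key key0 norm_mult indicator_def)
    qed
    show "AE x in M. (\<lambda>k. phi k x * g x) \<longlonglongrightarrow> u x"
      using AE_space L2_onD2[OF u]
    proof eventually_elim
      case (elim x)
      show ?case
      proof (cases "g x = 0")
        case True
        then have "u x = 0" using elim by auto
        then show ?thesis using True by (simp add: key0)
      next
        case False
        obtain k0 where k0: "cmod (psi x) \<le> real k0" using real_arch_simple by blast
        have "\<forall>k\<ge>k0. phi k x * g x = u x"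
        proof (intro allI impI)
          fix k assume "k0 \<le> k"
          then have "cmod (psi x) \<le> real k" using k0 by linarith
          then show "phi k x * g x = u x" using key[OF False, of k] elim by (simp add: indicator_def)
        qed
        then show ?thesis by (intro tendsto_eventually) (auto simp: eventually_sequentially)
      qed
    qed
  qed
qed

definition "AA = {A \<in> sets M. L2_on M A \<subseteq> V}"

lemma AA_empty: "{} \<in> AA"
  unfolding AA_def
proof (safe)
  fix u assume u: "u \<in> L2_on M {}"
  have "AE x in M. 0 = u x" using L2_onD2[OF u] by (rule eventually_mono) auto
  then show "u \<in> V" using CS_zero[OF CSV] L2_onD[OF u] V_ae by blast
qed

lemma AA_sub: "A \<in> AA \<Longrightarrow> B \<in> sets M \<Longrightarrow> B \<subseteq> A \<Longrightarrow> B \<in> AA"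
  unfolding AA_def using L2_on_mono by blast

lemma AA_un: assumes A: "A \<in> AA" and B: "B \<in> AA" shows "A \<union> B \<in> AA"
proof -
  have As[measurable]: "A \<in> sets M" and Bs[measurable]: "B \<in> sets M" using A B unfolding AA_def by auto
  have "u \<in> V" if u: "u \<in> L2_on M (A \<union> B)" for u
  proof -
    have uL: "u \<in> L2 M" by (rule L2_onD[OF u])
    have u1: "(\<lambda>x. indicator A x * u x) \<in> L2_on M A"
      by (rule L2_onI[OF L2_indicator_mult[OF uL As]]) (auto simp: indicator_def)
    have u2: "(\<lambda>x. indicator (space M - A) x * u x) \<in> L2_on M B"
    proof (rule L2_onI)
      show "(\<lambda>x. indicator (space M - A) x * u x) \<in> L2 M" by (rule L2_indicator_mult[OF uL]) simp
      show "AE x in M. x \<notin> B \<longrightarrow> indicator (space M - A) x * u x = 0"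
        using L2_onD2[OF u] by (rule eventually_mono) (auto simp: indicator_def)
    qed
    have "(\<lambda>x. indicator A x * u x + indicator (space M - A) x * u x) \<in> V"
      using u1 u2 A B unfolding AA_def by (intro CS_add[OF CSV]) auto
    moreover have "AE x in M. indicator A x * u x + indicator (space M - A) x * u x = u x"
      by (rule AE_I2) (auto simp: indicator_def)
    ultimately show ?thesis using V_ae uL by blast
  qed
  then show ?thesis unfolding AA_def by auto
qed

lemma AA_Union: assumes A: "\<And>i::nat. A i \<in> AA" shows "(\<Union>i. A i) \<in> AA"
proof -
  define U where "U k = (\<Union>i<k. A i)" for k
  have U: "U k \<in> AA" for k
  proof (induction k)
    case 0 then show ?case using AA_empty by (simp add: U_def)
  next
    case (Suc k)
    have "U (Suc k) = U k \<union> A k" by (auto simp: U_def lessThan_Suc)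
    then show ?case using AA_un[OF Suc A] by simp
  qed
  have Us[measurable]: "U k \<in> sets M" for k using U unfolding AA_def by auto
  have sets: "(\<Union>i. A i) \<in> sets M" using A unfolding AA_def by auto
  have "u \<in> V" if u: "u \<in> L2_on M (\<Union>i. A i)" for u
  proof (rule CS_lim[OF CSV, where G="\<lambda>k x. indicator (U k) x * u x" and b=u])
    have uL: "u \<in> L2 M" by (rule L2_onD[OF u])
    then show "u \<in> L2 M" "u \<in> L2 M" by auto
    show "(\<lambda>x. indicator (U k) x * u x) \<in> V" for k
    proof -
      have "(\<lambda>x. indicator (U k) x * u x) \<in> L2_on M (U k)"
        by (rule L2_onI[OF L2_indicator_mult[OF uL Us]]) (auto simp: indicator_def)
      then show ?thesis using U[of k] unfolding AA_def by blast
    qed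
    show "AE x in M. cmod (indicator (U k) x * u x) \<le> cmod (u x)" for k
      by (intro AE_I2) (auto simp: indicator_def)
    show "AE x in M. (\<lambda>k. indicator (U k) x * u x) \<longlonglongrightarrow> u x"
      using L2_onD2[OF u]
    proof eventually_elim
      case (elim x)
      show ?case
      proof (cases "x \<in> (\<Union>i. A i)")
        case True
        then obtain i where "x \<in> A i" by blast
        then have "\<forall>k\<ge>Suc i. indicator (U k) x * u x = u x"
          by (auto simp: U_def indicator_def)
        then show ?thesis by (intro tendsto_eventually) (auto simp: eventually_sequentially)
      next
        case False
        then have e: "indicator (U k) x * u x = u x" for k using elim by (auto simp: U_def indicator_def)
        show ?thesis unfolding e by (rule tendsto_const)
      qed
    qed
  qed
  then show ?thesis using sets unfolding AA_def by auto
qed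

lemma AA_E: assumes B: "B \<in> AA" shows "B - E \<in> null_sets M"
proof (rule null_by_cyl)
  have Bs[measurable]: "B \<in> sets M" using B unfolding AA_def by auto
  show "B - E \<in> sets M" by measurable
  fix l
  define u :: "_ \<Rightarrow> complex" where "u = indicator (B \<inter> Z l)"
  have "emeasure M (B \<inter> Z l) \<le> emeasure M (Z l)" by (intro emeasure_mono) auto
  then have fin: "emeasure M (B \<inter> Z l) < \<infinity>" using cyl_fin[of l] by simp
  have "u \<in> L2_on M B"
    unfolding u_def by (rule L2_onI[OF L2_indicator]) (use fin in auto)
  then have "u \<in> V" using B unfolding AA_def by blast
  then have "u \<in> L2_on M E" using VE by blast
  from L2_onD2[OF this] have ae: "AE x in M. x \<notin> (B - E) \<inter> Z l"
    unfolding u_def by (rule eventually_mono) (auto simp: indicator_def split: if_splits)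
  have eq: "{x\<in>space M. \<not> (x \<notin> (B - E) \<inter> Z l)} = (B - E) \<inter> Z l" using sets.sets_into_space[OF Bs] by blast
  have "emeasure M ((B - E) \<inter> Z l) = 0"
    using AE_iff_measurable[OF _ eq] ae by simp
  then show "(B - E) \<inter> Z l \<in> null_sets M" by auto
qed

end


context irr begin

lemma AA_sets: "A \<in> AA \<Longrightarrow> A \<in> sets M" unfolding AA_def by auto

lemma AA_max: "\<exists>F0\<in>AA. \<forall>B\<in>AA. B - F0 \<in> null_sets M"
proof -
  interpret sf: sigma_finite_measure M by (rule sigma_finite)
  obtain h where h[measurable]: "h \<in> borel_measurable M" and hfin: "integral\<^sup>N M h \<noteq> \<infinity>"
    and hpos: "\<forall>x\<in>space M. 0 < h x \<and> h x < \<infinity>"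
    using sf.Ex_finite_integrable_function by blast
  define nu where "nu A = (\<integral>\<^sup>+x. h x * indicator A x \<partial>M)" for A
  have nu_mono: "nu A \<le> nu B" if "A \<subseteq> B" for A B
    unfolding nu_def by (intro nn_integral_mono) (use that in \<open>auto simp: indicator_def\<close>)
  have nu_fin: "nu A < \<infinity>" for A
  proof -
    have "nu A \<le> integral\<^sup>N M h" unfolding nu_def by (intro nn_integral_mono) (auto simp: indicator_def)
    then show ?thesis using hfin by (simp add: less_top order_le_less_trans)
  qed
  have nu_add: "nu (A \<union> B) = nu A + nu B" if "A \<in> sets M" "B \<in> sets M" "A \<inter> B = {}" for A B
  proof -
    have "nu (A \<union> B) = (\<integral>\<^sup>+x. h x * indicator A x + h x * indicator B x \<partial>M)"
      unfolding nu_def by (intro nn_integral_cong) (use that in \<open>auto simp: indicator_def\<close>)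
    also have "\<dots> = nu A + nu B" unfolding nu_def using that by (intro nn_integral_add) auto
    finally show ?thesis .
  qed
  have nu_zero: "A \<in> null_sets M" if A: "A \<in> sets M" "nu A = 0" for A
  proof -
    have "AE x in M. h x * indicator A x = 0"
      using A(2) unfolding nu_def by (subst (asm) nn_integral_0_iff_AE) (use A in auto)
    then have ae: "AE x in M. x \<notin> A"
      using AE_space by eventually_elim (use hpos in \<open>auto simp: indicator_def split: if_splits\<close>)
    have eq: "{x\<in>space M. \<not> x \<notin> A} = A" using sets.sets_into_space[OF A(1)] by blast
    have "emeasure M A = 0" using AE_iff_measurable[OF A(1) eq] ae by simp
    then show ?thesis using A by auto
  qed
  have ne: "AA \<noteq> {}" using AA_empty by blast
  obtain Fs :: "nat \<Rightarrow> ennreal" where Fs: "range Fs \<subseteq> nu ` AA" "Sup (nu ` AA) = Sup (range Fs)"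
    using ennreal_SUP_countable_SUP[OF ne, of nu] by blast
  have "\<forall>i. \<exists>A. A \<in> AA \<and> Fs i = nu A" using Fs(1) by blast
  from choice[OF this] obtain A where A: "\<And>i. A i \<in> AA" "\<And>i. Fs i = nu (A i)" by blast
  define F0 where "F0 = (\<Union>i. A i)"
  have F0: "F0 \<in> AA" unfolding F0_def by (rule AA_Union[OF A(1)])
  have le1: "Sup (nu ` AA) \<le> nu F0"
    unfolding Fs(2)
  proof (rule Sup_least)
    fix y assume "y \<in> range Fs"
    then obtain i where "y = Fs i" by blast
    then show "y \<le> nu F0" using A(2) nu_mono[of "A i" F0] unfolding F0_def by auto
  qed
  have le2: "nu B \<le> Sup (nu ` AA)" if "B \<in> AA" for B using that by (intro Sup_upper) auto
  show ?thesis
  proof (intro bexI[OF _ F0] ballI)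
    fix B assume B: "B \<in> AA"
    have U: "F0 \<union> B \<in> AA" by (rule AA_un[OF F0 B])
    have e: "F0 \<union> B = F0 \<union> (B - F0)" by blast
    have "nu (F0 \<union> (B - F0)) = nu F0 + nu (B - F0)"
      by (rule nu_add) (use AA_sets[OF F0] AA_sets[OF B] in auto)
    then have "nu (F0 \<union> B) = nu F0 + nu (B - F0)" unfolding e .
    moreover have "nu (F0 \<union> B) \<le> nu F0" using le2[OF U] le1 by simp
    ultimately have "nu F0 + nu (B - F0) \<le> nu F0 + 0" by simp
    then have "nu F0 = \<infinity> \<or> nu (B - F0) \<le> 0" by (simp only: ennreal_add_left_cancel_le)
    then have "nu (B - F0) = 0" using nu_fin[of F0] by auto
    then show "B - F0 \<in> null_sets M" using AA_sets[OF F0] AA_sets[OF B] by (intro nu_zero) auto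
  qed
qed

lemma AA_maxE: "\<exists>F\<in>AA. F \<subseteq> E \<and> (\<forall>B\<in>AA. B - F \<in> null_sets M)"
proof -
  obtain F0 where F0: "F0 \<in> AA" "\<forall>B\<in>AA. B - F0 \<in> null_sets M" using AA_max by blast
  have F0s: "F0 \<in> sets M" by (rule AA_sets[OF F0(1)])
  have "F0 \<inter> E \<in> AA" by (rule AA_sub[OF F0(1)]) (use F0s in auto)
  moreover have "B - F0 \<inter> E \<in> null_sets M" if B: "B \<in> AA" for B
  proof -
    have e: "B - F0 \<inter> E = (B - F0) \<union> (B - E)" by blast
    have "(B - F0) \<union> (B - E) \<in> null_sets M"
      by (rule null_sets.Un[OF F0(2)[rule_format, OF B] AA_E[OF B]])
    then show ?thesis unfolding e .
  qed
  ultimately show ?thesis by blast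
qed

context
  fixes F assumes FA: "F \<in> AA" and Fmax: "\<forall>B\<in>AA. B - F \<in> null_sets M"
begin

lemma Fs[measurable]: "F \<in> sets M" using AA_sets[OF FA] .

lemma F_V: "u \<in> L2_on M F \<Longrightarrow> u \<in> V" using FA unfolding AA_def by blast

lemma B1: "(shift (d l) -` F \<inter> space M) \<inter> W l \<in> AA"
proof -
  let ?B = "(shift (d l) -` F \<inter> space M) \<inter> W l"
  have Bs: "?B \<in> sets M" using measurable_sets[OF shift_meas Fs] by auto
  have "u \<in> V" if u: "u \<in> L2_on M ?B" for u
  proof -
    have uL: "u \<in> L2 M" by (rule L2_onD[OF u])
    have "Adj l u \<in> L2_on M F"
    proof (rule L2_onI[OF Adj_L2[OF uL]])
      show "AE x in M. x \<notin> F \<longrightarrow> Adj l u x = 0"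
        using Adj_supp[OF L2_onD2[OF u], of l]
      proof (rule eventually_mono)
        fix y assume h: "Adj l u y \<noteq> 0 \<longrightarrow> y \<in> Dl l \<and> tau l y \<in> ?B"
        show "y \<notin> F \<longrightarrow> Adj l u y = 0"
        proof (intro impI)
          assume yF: "y \<notin> F"
          show "Adj l u y = 0"
          proof (rule ccontr)
            assume "Adj l u y \<noteq> 0"
            then have y: "y \<in> Dl l" "shift (d l) (tau l y) \<in> F" using h by auto
            then show False using shift_tau[OF y(1)] yF by simp
          qed
        qed
      qed
    qed
    then have "Top d f l (Adj l u) \<in> V" using F_V VT by blast
    moreover have "AE x in M. Top d f l (Adj l u) x = u x"
      using TA_ae[of l u] L2_onD2[OF u]
    proof eventually_elim
      case (elim x)
      show ?case
      proof (cases "x \<in> W l")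
        case True
        then show ?thesis using elim(1) by (simp add: indicator_simps)
      next
        case False
        then have "x \<notin> ?B" by blast
        then show ?thesis using elim False by (simp add: indicator_simps)
      qed
    qed
    ultimately show ?thesis using V_ae uL by blast
  qed
  then show ?thesis using Bs unfolding AA_def by blast
qed

lemma B2: "tau l -` F \<inter> Dl l \<in> AA"
proof -
  let ?B = "tau l -` F \<inter> Dl l"
  have Bs: "?B \<in> sets M" by (rule tau_pre_sets[OF Fs])
  have "w \<in> V" if w: "w \<in> L2_on M ?B" for w
  proof -
    have wL: "w \<in> L2 M" by (rule L2_onD[OF w])
    have "Top d f l w \<in> L2_on M F"
    proof (rule L2_onI[OF T_L2[OF wL]])
      show "AE x in M. x \<notin> F \<longrightarrow> Top d f l w x = 0"
        using T_supp[OF L2_onD2[OF w], of l]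
      proof (rule eventually_mono)
        fix x assume h: "Top d f l w x \<noteq> 0 \<longrightarrow> x \<in> W l \<and> shift (d l) x \<in> ?B"
        show "x \<notin> F \<longrightarrow> Top d f l w x = 0"
        proof (intro impI)
          assume xF: "x \<notin> F"
          show "Top d f l w x = 0"
          proof (rule ccontr)
            assume "Top d f l w x \<noteq> 0"
            then have x: "x \<in> W l" "tau l (shift (d l) x) \<in> F" using h by auto
            then show False using W_inv[OF x(1)] xF by simp
          qed
        qed
      qed
    qed
    then have "Adj l (Top d f l w) \<in> V" using F_V V_Adj by blast
    moreover have "AE x in M. Adj l (Top d f l w) x = w x"
      using AT_ae[of l w] L2_onD2[OF w]
    proof eventually_elim
      case (elim x)
      show ?case
      proof (cases "x \<in> Dl l")
        case True
        then show ?thesis using elim(1) by (simp add: indicator_simps)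
      next
        case False
        then have "x \<notin> ?B" by blast
        then show ?thesis using elim False by (simp add: indicator_simps)
      qed
    qed
    ultimately show ?thesis using V_ae wL by blast
  qed
  then show ?thesis using Bs unfolding AA_def by blast
qed

lemma F_inv1: "(shift n -` F \<inter> space M) - F \<in> null_sets M"
proof (rule null_sets_subset)
  let ?U = "(\<Union>l\<in>{l. d l = n}. (shift (d l) -` F \<inter> space M) \<inter> W l - F) \<union> (space M - (\<Union>l'\<in>{l'. d l' = n}. W l'))"
  show "?U \<in> null_sets M"
  proof (rule null_sets.Un)
    show "(\<Union>l\<in>{l. d l = n}. (shift (d l) -` F \<inter> space M) \<inter> W l - F) \<in> null_sets M"
      using Fmax B1 by (intro null_sets_UN'[OF countable_deg]) blast
    show "space M - (\<Union>l'\<in>{l'. d l' = n}. W l') \<in> null_sets M" by (rule cover_null)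
  qed
  show "(shift n -` F \<inter> space M) - F \<in> sets M" using measurable_sets[OF shift_meas Fs] by auto
  show "(shift n -` F \<inter> space M) - F \<subseteq> ?U" by blast
qed

lemma F_inv2: "F - (shift n -` F \<inter> space M) \<in> null_sets M"
proof (rule null_sets_subset)
  let ?U = "(\<Union>l\<in>{l. d l = n}. tau l ` (tau l -` F \<inter> Dl l - F)) \<union> (space M - (\<Union>l'\<in>{l'. d l' = n}. W l'))"
  show "?U \<in> null_sets M"
  proof (rule null_sets.Un)
    show "(\<Union>l\<in>{l. d l = n}. tau l ` (tau l -` F \<inter> Dl l - F)) \<in> null_sets M"
    proof (intro null_sets_UN'[OF countable_deg])
      fix l
      have "tau l -` F \<inter> Dl l - F \<in> null_sets M" using Fmax B2 by blast
      then show "tau l ` (tau l -` F \<inter> Dl l - F) \<in> null_sets M" by (intro img_null) auto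
    qed
    show "space M - (\<Union>l'\<in>{l'. d l' = n}. W l') \<in> null_sets M" by (rule cover_null)
  qed
  show "F - (shift n -` F \<inter> space M) \<in> sets M" using measurable_sets[OF shift_meas Fs] by auto
  show "F - (shift n -` F \<inter> space M) \<subseteq> ?U"
  proof
    fix x assume x: "x \<in> F - (shift n -` F \<inter> space M)"
    then have xs: "x \<in> space M" using sets.sets_into_space[OF Fs] by blast
    show "x \<in> ?U"
    proof (cases "\<exists>l. d l = n \<and> x \<in> W l")
      case True
      then obtain l y where l: "d l = n" "y \<in> Dl l" "x = tau l y" by blast
      then have "shift n x = y" using shift_tau[OF l(2)] l(1,3) by simp
      then have "y \<in> tau l -` F \<inter> Dl l - F" using x l xs by auto
      then show ?thesis using l by blast
    next
      case False
      then show ?thesis using xs by blast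
    qed
  qed
qed

end

theorem irr_main: "(\<forall>g\<in>V. AE x in M. g x = 0) \<or> V = L2_on M E"
proof -
  obtain F where FA: "F \<in> AA" and FE: "F \<subseteq> E" and Fmax: "\<forall>B\<in>AA. B - F \<in> null_sets M"
    using AA_maxE by blast
  have Fs[measurable]: "F \<in> sets M" using AA_sets[OF FA] .
  show ?thesis
  proof (cases "emeasure M F = 0")
    case True
    have "AE x in M. g x = 0" if g: "g \<in> V" for g
    proof -
      note [measurable] = L2_meas[OF V_L2[OF g]]
      let ?S = "{x\<in>space M. g x \<noteq> 0}"
      have Ss: "?S \<in> sets M" by measurable
      have "?S \<in> AA" unfolding AA_def using Ss V_supp[OF g] by blast
      then have "?S - F \<in> null_sets M" using Fmax by blast
      moreover have "F \<in> null_sets M" using True by auto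
      ultimately have "(?S - F) \<union> F \<in> null_sets M" by (rule null_sets.Un)
      then have "?S \<in> null_sets M" by (rule null_sets_subset) (use Ss in auto)
      then have "AE x in M. x \<notin> ?S" by (rule AE_not_in)
      then show ?thesis using AE_space by eventually_elim auto
    qed
    then show ?thesis by blast
  next
    case False
    have inv: "mu_invariant M F"
      unfolding mu_invariant_def
    proof (intro conjI allI Fs False)
      fix n
      have "(F - (shift n -` F \<inter> space M)) \<union> ((shift n -` F \<inter> space M) - F) \<in> null_sets M"
        by (rule null_sets.Un[OF F_inv2[OF FA Fmax, of n] F_inv1[OF FA Fmax, of n]])
      then show "emeasure M ((F - (shift n -` F \<inter> space M)) \<union> ((shift n -` F \<inter> space M) - F)) = 0"
        by (rule null_setsD1)
    qed
    have "emeasure M ((F - E) \<union> (E - F)) = 0"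
      using minE inv FE unfolding minimal_mu_invariant_def by blast
    then have "(F - E) \<union> (E - F) \<in> null_sets M" using Fs E_sets by auto
    then have EF: "E - F \<in> null_sets M"
      by (rule null_sets_subset) (use Fs E_sets in auto)
    have "L2_on M E \<subseteq> V"
    proof
      fix u assume u: "u \<in> L2_on M E"
      have "u \<in> L2_on M F"
      proof (rule L2_onI[OF L2_onD[OF u]])
        show "AE x in M. x \<notin> F \<longrightarrow> u x = 0"
          using L2_onD2[OF u] AE_not_in[OF EF] by eventually_elim auto
      qed
      then show "u \<in> V" using FA unfolding AA_def by blast
    qed
    then show ?thesis using VE by blast
  qed
qed

end

theorem theorem4p20:
  fixes d :: "'p \<Rightarrow> ('k::finite \<Rightarrow> nat)"
    and r s :: "'p \<Rightarrow> 'p"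
    and cmp :: "'p \<Rightarrow> 'p \<Rightarrow> 'p"
    and M :: "(('k \<Rightarrow> nat) \<Rightarrow> ('k \<Rightarrow> nat) \<Rightarrow> 'p) measure"
    and f :: "'p \<Rightarrow> (('k \<Rightarrow> nat) \<Rightarrow> ('k \<Rightarrow> nat) \<Rightarrow> 'p) \<Rightarrow> complex"
    and E :: "(('k \<Rightarrow> nat) \<Rightarrow> ('k \<Rightarrow> nat) \<Rightarrow> 'p) set"
  assumes kg: "kgraph d r s cmp"
    and rf: "row_finite d r"
    and sf: "source_free d r"
    and ns: "no_sinks d s"
    and space_M: "space M = infpaths d r s cmp"
    and sets_M: "sets M = sigma_sets (infpaths d r s cmp) (range (cyl d r s cmp))"
    and radon: "\<forall>l. emeasure M (cyl d r s cmp l) < \<infinity>"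
    and proj: "projective_system d r s cmp M f"
    and minE: "minimal_mu_invariant M E"
  shows "(\<forall>l. (\<forall>g\<in>L2_on M E. Top d f l g \<in> L2_on M E)
              \<and> adj_invariant M (L2 M) (Top d f l) (L2_on M E))
       \<and> (\<exists>g\<in>L2_on M E. \<not> (AE x in M. g x = 0))
       \<and> (\<forall>V. closed_subspace M V \<and> V \<subseteq> L2_on M E \<and>
              (\<forall>l. (\<forall>g\<in>V. Top d f l g \<in> V) \<and> adj_invariant M (L2_on M E) (Top d f l) V)
              \<longrightarrow> (\<forall>g\<in>V. AE x in M. g x = 0) \<or> V = L2_on M E)"
proof -
  interpret setE d r s cmp M f E
    by (unfold_locales) (fact kg space_M sets_M radon proj minE)+
  have P1: "\<forall>l. (\<forall>g\<in>L2_on M E. Top d f l g \<in> L2_on M E) \<and> adj_invariant M (L2 M) (Top d f l) (L2_on M E)"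
    using part1a part1c by blast
  have P3: "(\<forall>g\<in>V. AE x in M. g x = 0) \<or> V = L2_on M E"
    if V: "closed_subspace M V \<and> V \<subseteq> L2_on M E \<and>
              (\<forall>l. (\<forall>g\<in>V. Top d f l g \<in> V) \<and> adj_invariant M (L2_on M E) (Top d f l) V)" for V
  proof -
    interpret irr d r s cmp M f E V
      by unfold_locales (use V in blast)+
    show ?thesis by (rule irr_main)
  qed
  show ?thesis using P1 part2 P3 by blast
qed


end
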